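(* Consider the local time-stepping Adams–Bashforth scheme of order $k$ described in the context, and let $\mathbf{y}(t)$ be an exact solution of $\frac{d\mathbf{y}}{dt}=\mathbf{D}(\mathbf{y})$ with $\mathbf{D}$ sufficiently smooth. Fix a step index $n$ and consider the family of step patterns obtained by scaling all the time differences among $\tilde t_{n+1},\tilde t_n,\ldots,\tilde t_{n-(k-1)}$ and $t^s_{m^s(n)},\ldots,t^s_{m^s(n)-(k-1)}$ ($s=1,\ldots,S$) by a parameter $h>0$ (with the pattern otherwise fixed). Suppose that the past values satisfy $\mathbf{y}^s_q=\mathbf{y}^s(t^s_q)+O(h^k)$ for all $s$ and all $q\in\{m^s(n)-(k-1),\ldots,m^s(n)\}$. Then $\Delta\tilde{\mathbf{y}}_n=\mathbf{y}(\tilde t_{n+1})-\mathbf{y}(\tilde t_n)+O(h^{k+1})$ as $h\to0$.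
   Context: We solve an autonomous system $\frac{d\mathbf{y}}{dt}=\mathbf{D}(\mathbf{y})$, $\mathbf{y}\in\mathbb{R}^N$. The components of $\mathbf{y}$ are partitioned into $S$ sets, $\mathbf{y}=(\mathbf{y}^1,\ldots,\mathbf{y}^S)$. Set $s$ is evaluated at strictly increasing times $t^s_0<t^s_1<\cdots$, and $\mathbf{y}^s_q$ denotes the numerical value of $\mathbf{y}^s$ at time $t^s_q$. Let $\tilde t_0<\tilde t_1<\cdots$ be the increasing enumeration of the union of all evaluation times of all sets, $\Delta\tilde t_n=\tilde t_{n+1}-\tilde t_n$. For each $s,n$ let $m^s(n)$ be the index with $t^s_{m^s(n)}\le\tilde t_n<t^s_{m^s(n)+1}$. Lagrange polynomials: $\ell_j(t;\tau_0,\ldots,\tau_{k-1})=\prod_{i\ne j}\frac{t-\tau_i}{\tau_j-\tau_i}$. Adams–Bashforth coefficients: $\tilde\alpha_{ni}=\frac{1}{\Delta\tilde t_n}\int_{\tilde t_n}^{\tilde t_{n+1}}\ell_i(t;\tilde t_n,\ldots,\tilde t_{n-(k-1)})\,dt$. The scheme's substep is $\Delta\tilde{\mathbf{y}}_n=\sum_{q^1=m^1(n)-(k-1)}^{m^1(n)}\cdots\sum_{q^S=m^S(n)-(k-1)}^{m^S(n)}\beta_{n;q^1\cdots q^S}\,\mathbf{D}(\mathbf{y}^1_{q^1},\ldots,\mathbf{y}^S_{q^S})$ with $\beta_{n;q^1\cdots q^S}=\Delta\tilde t_n\sum_{i=0}^{k-1}\tilde\alpha_{ni}\prod_{s=1}^S\ell_{m^s(n)-q^s}\big(\tilde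 t_{n-i};t^s_{m^s(n)},\ldots,t^s_{m^s(n)-(k-1)}\big)$. *)

theory Defs
  imports "HOL-Analysis.Analysis" "HOL-Library.Landau_Symbols"
begin

definition partial_dir :: "'n::finite \<Rightarrow> (real^'n \<Rightarrow> real^'m) \<Rightarrow> real^'n \<Rightarrow> real^'m" where
  "partial_dir i f x = vector_derivative (\<lambda>t. f (x + t *\<^sub>R axis i 1)) (at 0)"

definition smooth_vf :: "(real^'n::finite \<Rightarrow> real^'m) \<Rightarrow> bool" where
  "smooth_vf f \<longleftrightarrow> (\<forall>ds :: 'n list.
     continuous_on UNIV (fold partial_dir ds f) \<and>
     (\<forall>x i. (\<lambda>t. fold partial_dir ds f (x + t *\<^sub>R axis i 1)) differentiable (at 0)))"

definition lagr :: "nat \<Rightarrow> (nat \<Rightarrow> real) \<Rightarrow> nat \<Rightarrow> real \<Rightarrow> real" where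
  "lagr k tau j t = (\<Prod>i\<in>{..<k} - {j}. (t - tau i) / (tau j - tau i))"

text \<open>Adams--Bashforth coefficient alpha~_{ni}; tnext = t~_{n+1}, tpast i = t~_{n-i}.\<close>
definition ab_alpha :: "nat \<Rightarrow> real \<Rightarrow> (nat \<Rightarrow> real) \<Rightarrow> nat \<Rightarrow> real" where
  "ab_alpha k tnext tpast i =
     (1 / (tnext - tpast 0)) * integral {tpast 0..tnext} (lagr k tpast i)"

text \<open>beta_{n;q^1...q^S}, with J s = m^s(n) - q^s and tset s j = t^s_{m^s(n)-j}.\<close>
definition lts_beta :: "nat \<Rightarrow> real \<Rightarrow> (nat \<Rightarrow> real) \<Rightarrow> ('s::finite \<Rightarrow> nat \<Rightarrow> real)
    \<Rightarrow> ('s \<Rightarrow> nat) \<Rightarrow> real" where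
  "lts_beta k tnext tpast tset J =
     (tnext - tpast 0) * (\<Sum>i<k. ab_alpha k tnext tpast i *
        (\<Prod>s\<in>UNIV. lagr k (tset s) (J s) (tpast i)))"

text \<open>The substep Delta y~_n. blk i is the set containing component i;
  Y s j is (a vector whose components in set s are) y^s_{m^s(n)-j}.\<close>
definition lts_substep :: "nat \<Rightarrow> ('n::finite \<Rightarrow> 's::finite) \<Rightarrow> (real^'n \<Rightarrow> real^'n)
    \<Rightarrow> real \<Rightarrow> (nat \<Rightarrow> real) \<Rightarrow> ('s \<Rightarrow> nat \<Rightarrow> real) \<Rightarrow> ('s \<Rightarrow> nat \<Rightarrow> real^'n) \<Rightarrow> real^'n" where
  "lts_substep k blk D tnext tpast tset Y =
     (\<Sum>J\<in>{J. \<forall>s. J s < k}. lts_beta k tnext tpast tset J *\<^sub>R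
         D (\<chi> i. Y (blk i) (J (blk i)) $ i))"

end

theory Submission
  imports Defs "HOL-Computational_Algebra.Polynomial"
begin

definition lpoly :: "nat \<Rightarrow> (nat \<Rightarrow> real) \<Rightarrow> nat \<Rightarrow> real poly" where
  "lpoly k x j = (\<Prod>i\<in>{..<k} - {j}. [:- x i / (x j - x i), 1 / (x j - x i):])"

lemma lagr_poly: "lagr k x j t = poly (lpoly k x j) t"
  unfolding lagr_def lpoly_def poly_prod
  by (intro prod.cong) (auto simp: diff_divide_distrib)

lemma lpoly_degree: "j < k \<Longrightarrow> degree (lpoly k x j) \<le> k - 1"
proof -
  assume j: "j < k"
  have "degree (lpoly k x j) \<le> sum (degree \<circ> (\<lambda>i. [:- x i / (x j - x i), 1 / (x j - x i):])) ({..<k} - {j})"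
    unfolding lpoly_def by (rule degree_prod_sum_le) simp
  also have "\<dots> \<le> sum (\<lambda>i. 1) ({..<k} - {j})"
    by (intro sum_mono) auto
  also have "\<dots> = k - 1" using j by simp
  finally show ?thesis .
qed

lemma lagr_delta:
  assumes "inj_on x {..<k}" "i < k" "j < k"
  shows "lagr k x j (x i) = (if i = j then 1 else 0)"
proof (cases "i = j")
  case True
  have "\<forall>l\<in>{..<k} - {j}. (x i - x l) / (x j - x l) = 1"
    using assms True by (auto simp: inj_on_def)
  then show ?thesis unfolding lagr_def using True
    by (simp add: prod.neutral)
next
  case False
  then show ?thesis unfolding lagr_def using assms
    by (intro prod_zero[THEN trans]) (auto intro!: bexI[of _ i])
qed

lemma lagr_reproduce:
  assumes inj: "inj_on x {..<k}" and m: "m < k"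
  shows "(\<Sum>j<k. lagr k x j t * (x j - s) ^ m) = (t - s) ^ m"
proof -
  define Q where "Q = (\<Sum>j<k. smult ((x j - s) ^ m) (lpoly k x j)) - [:- s, 1:] ^ m"
  have pQ: "poly Q r = (\<Sum>j<k. lagr k x j r * (x j - s) ^ m) - (r - s) ^ m" for r
    unfolding Q_def by (simp add: poly_sum lagr_poly poly_power mult.commute)
  have dQ: "degree Q \<le> k - 1"
    unfolding Q_def
  proof (rule degree_diff_le)
    show "degree (\<Sum>j<k. smult ((x j - s) ^ m) (lpoly k x j)) \<le> k - 1"
      by (rule degree_sum_le) (simp, meson lessThan_iff order.trans[OF degree_smult_le lpoly_degree])
    show "degree ([:- s, 1:] ^ m) \<le> k - 1" using m by (simp add: degree_power_eq)
  qed
  have roots: "x ` {..<k} \<subseteq> {r. poly Q r = 0}"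
  proof
    fix r assume "r \<in> x ` {..<k}"
    then obtain i where i: "i < k" "r = x i" by auto
    have "(\<Sum>j<k. lagr k x j (x i) * (x j - s) ^ m) = (\<Sum>j<k. (if j = i then (x j - s) ^ m else 0))"
      by (intro sum.cong refl) (simp add: lagr_delta[OF inj i(1)])
    also have "\<dots> = (x i - s) ^ m" using i by simp
    finally show "r \<in> {r. poly Q r = 0}" using i pQ by simp
  qed
  have "Q = 0"
  proof (rule ccontr)
    assume "Q \<noteq> 0"
    then have "card {r. poly Q r = 0} \<le> k - 1" using card_poly_roots_bound dQ order.trans by blast
    moreover have "card (x ` {..<k}) \<le> card {r. poly Q r = 0}"
      using roots poly_roots_finite[OF \<open>Q \<noteq> 0\<close>] by (rule card_mono[rotated])
    moreover have "card (x ` {..<k}) = k" using inj by (simp add: card_image)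
    ultimately show False using m by linarith
  qed
  then show ?thesis using pQ[of t] by simp
qed

lemma lagr_sum1:
  assumes "inj_on x {..<k}" "0 < k"
  shows "(\<Sum>j<k. lagr k x j t) = 1"
  using lagr_reproduce[OF assms(1), of 0 t 0] assms(2) by simp

lemma lagr_scale:
  assumes "h \<noteq> 0"
  shows "lagr k (\<lambda>j. c + h * b j) j (c + h * th) = lagr k b j th"
  unfolding lagr_def
proof (intro prod.cong refl)
  fix i
  have "(c + h * th - (c + h * b i)) / (c + h * b j - (c + h * b i)) = (h * (th - b i)) / (h * (b j - b i))"
    by (simp add: algebra_simps)
  also have "\<dots> = (th - b i) / (b j - b i)" using assms by simp
  finally show "(c + h * th - (c + h * b i)) / (c + h * b j - (c + h * b i)) = (th - b i) / (b j - b i)" .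
qed

lemma continuous_lagr: "continuous_on S (lagr k x j)"
  unfolding lagr_poly by (intro continuous_intros)

lemma taylor_bound:
  fixes f :: "real \<Rightarrow> real" and diff :: "nat \<Rightarrow> real \<Rightarrow> real"
  assumes k: "0 < k" and d0: "diff 0 = f"
    and dv: "\<And>m t. m < k \<Longrightarrow> t \<in> ball c \<delta> \<Longrightarrow> DERIV (diff m) t :> diff (Suc m) t"
    and bd: "\<And>t. t \<in> ball c \<delta> \<Longrightarrow> \<bar>diff k t\<bar> \<le> M"
    and t: "t \<in> ball c \<delta>" and x: "x \<in> ball c \<delta>"
  shows "\<bar>f x - (\<Sum>m<k. diff m t / fact m * (x - t) ^ m)\<bar> \<le> M / fact k * \<bar>x - t\<bar> ^ k"
proof (cases "x = t")
  case True
  have "(\<Sum>m<k. diff m t / fact m * (x - t) ^ m) = (\<Sum>m<k. if m = 0 then f t else 0)"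
    using True d0 by (intro sum.cong) auto
  also have "\<dots> = f t" using k by simp
  finally show ?thesis using True k by (simp add: zero_power)
next
  case False
  define a where "a = min x t"
  define b where "b = max x t"
  have sub: "{a..b} \<subseteq> ball c \<delta>"
  proof
    fix r assume "r \<in> {a..b}"
    then have "r \<in> closed_segment x t" using closed_segment_eq_real_ivl[of x t]
      by (auto simp: a_def b_def split: if_splits)
    then show "r \<in> ball c \<delta>" using convex_ball[of c \<delta>] x t
      by (meson closed_segment_subset subsetD)
  qed
  have "\<exists>\<xi>. (if x < t then x < \<xi> \<and> \<xi> < t else t < \<xi> \<and> \<xi> < x) \<and>
    f x = (\<Sum>m<k. (diff m t / fact m) * (x - t)^m) + (diff k \<xi> / fact k) * (x - t)^k"
    by (rule Taylor[where diff=diff and f=f and n=k and a=a and b=b, OF k d0]) (use sub dv False in \<open>auto simp: a_def b_def\<close>)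
  then obtain \<xi> where xi: "(if x < t then x < \<xi> \<and> \<xi> < t else t < \<xi> \<and> \<xi> < x)"
    and eq: "f x = (\<Sum>m<k. (diff m t / fact m) * (x - t)^m) + (diff k \<xi> / fact k) * (x - t)^k"
    by blast
  have "\<xi> \<in> {a..b}" using xi by (auto simp: a_def b_def split: if_splits)
  then have "\<xi> \<in> ball c \<delta>" using sub by blast
  then have "\<bar>diff k \<xi>\<bar> \<le> M" by (rule bd)
  then have "\<bar>diff k \<xi> / fact k * (x - t) ^ k\<bar> \<le> M / fact k * \<bar>x - t\<bar> ^ k"
    by (simp add: abs_mult power_abs divide_right_mono mult_right_mono)
  then show ?thesis using eq by simp
qed

lemma interp_err:
  fixes f :: "real \<Rightarrow> real" and diff :: "nat \<Rightarrow> real \<Rightarrow> real"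
  assumes inj: "inj_on x {..<k}" and k: "0 < k" and d0: "diff 0 = f"
    and dv: "\<And>m t. m < k \<Longrightarrow> t \<in> ball c \<delta> \<Longrightarrow> DERIV (diff m) t :> diff (Suc m) t"
    and bd: "\<And>t. t \<in> ball c \<delta> \<Longrightarrow> \<bar>diff k t\<bar> \<le> M"
    and t: "t \<in> ball c \<delta>" and xs: "\<And>j. j < k \<Longrightarrow> x j \<in> ball c \<delta>"
    and rho: "\<And>j. j < k \<Longrightarrow> \<bar>x j - t\<bar> \<le> \<rho>"
    and lam: "\<And>j. j < k \<Longrightarrow> \<bar>lagr k x j t\<bar> \<le> \<Lambda>"
  shows "\<bar>(\<Sum>j<k. lagr k x j t * f (x j)) - f t\<bar> \<le> k * (\<Lambda> * (M / fact k * \<rho> ^ k))"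
proof -
  define R where "R j = f (x j) - (\<Sum>m<k. diff m t / fact m * (x j - t) ^ m)" for j
  have M0: "0 \<le> M" using bd[OF t] by linarith
  have "(\<Sum>j<k. lagr k x j t * f (x j)) = (\<Sum>j<k. lagr k x j t * R j)
      + (\<Sum>j<k. \<Sum>m<k. diff m t / fact m * (lagr k x j t * (x j - t) ^ m))"
    by (simp add: R_def algebra_simps sum.distrib sum_distrib_left sum_subtractf)
  also have "(\<Sum>j<k. \<Sum>m<k. diff m t / fact m * (lagr k x j t * (x j - t) ^ m))
     = (\<Sum>m<k. diff m t / fact m * (\<Sum>j<k. lagr k x j t * (x j - t) ^ m))"
    by (subst sum.swap) (simp add: sum_distrib_left)
  also have "\<dots> = (\<Sum>m<k. diff m t / fact m * (t - t) ^ m)"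
    by (intro sum.cong refl) (simp add: lagr_reproduce[OF inj])
  also have "\<dots> = (\<Sum>m<k. if m = 0 then f t else 0)"
    using d0 by (intro sum.cong) auto
  also have "\<dots> = f t" using k by simp
  finally have eq: "(\<Sum>j<k. lagr k x j t * f (x j)) - f t = (\<Sum>j<k. lagr k x j t * R j)" by simp
  have "\<bar>\<Sum>j<k. lagr k x j t * R j\<bar> \<le> (\<Sum>j<k. \<Lambda> * (M / fact k * \<rho> ^ k))"
  proof (rule order.trans[OF sum_abs], rule sum_mono)
    fix j assume j: "j \<in> {..<k}"
    have "\<bar>R j\<bar> \<le> M / fact k * \<bar>x j - t\<bar> ^ k"
      unfolding R_def using taylor_bound[OF k d0 dv bd t xs] j by auto
    also have "\<dots> \<le> M / fact k * \<rho> ^ k"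
      using rho[of j] j M0 by (intro mult_left_mono power_mono) auto
    finally have "\<bar>R j\<bar> \<le> M / fact k * \<rho> ^ k" .
    moreover have "\<bar>lagr k x j t\<bar> \<le> \<Lambda>" using lam j by auto
    ultimately show "\<bar>lagr k x j t * R j\<bar> \<le> \<Lambda> * (M / fact k * \<rho> ^ k)"
      unfolding abs_mult by (intro mult_mono) auto
  qed
  then show ?thesis using eq by simp
qed

lemma mvt_abs_bound:
  fixes g g' :: "real \<Rightarrow> real"
  assumes der: "\<And>\<rho>. \<bar>\<rho>\<bar> \<le> \<bar>r\<bar> \<Longrightarrow> DERIV g \<rho> :> g' \<rho>"
    and bd: "\<And>\<rho>. \<bar>\<rho>\<bar> \<le> \<bar>r\<bar> \<Longrightarrow> \<bar>g' \<rho>\<bar> \<le> B"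
  shows "\<bar>g r - g 0\<bar> \<le> B * \<bar>r\<bar>"
proof -
  have der': "\<And>\<rho>. min 0 r \<le> \<rho> \<Longrightarrow> \<rho> \<le> max 0 r \<Longrightarrow> DERIV g \<rho> :> g' \<rho>"
    by (rule der) (auto simp: min_def max_def split: if_splits)
  have bd': "\<And>\<rho>. min 0 r < \<rho> \<Longrightarrow> \<rho> < max 0 r \<Longrightarrow> \<bar>g' \<rho>\<bar> \<le> B"
    by (rule bd) (auto simp: min_def max_def split: if_splits)
  show ?thesis
  proof (cases "r = 0")
    case True then show ?thesis by simp
  next
    case False
    then have lt: "min 0 r < max 0 r" by linarith
    obtain z where z: "min 0 r < z" "z < max 0 r" "g (max 0 r) - g (min 0 r) = (max 0 r - min 0 r) * g' z"
      using MVT2[OF lt der'] by blast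
    have gz: "\<bar>g' z\<bar> \<le> B" using bd' z(1,2) .
    have "\<bar>g r - g 0\<bar> = \<bar>g (max 0 r) - g (min 0 r)\<bar>"
      by (cases "0 \<le> r") (simp_all add: abs_minus_commute max_def min_def)
    also have "\<dots> = \<bar>r\<bar> * \<bar>g' z\<bar>"
      unfolding z(3) abs_mult by (cases "0 \<le> r") (simp_all add: max_def min_def)
    also have "\<dots> \<le> \<bar>r\<bar> * B" using gz by (simp add: mult_left_mono)
    finally show ?thesis by (simp add: mult.commute)
  qed
qed

lemma partials_has_derivative:
  fixes G :: "real^'n \<Rightarrow> real" and P :: "'n \<Rightarrow> real^'n \<Rightarrow> real"
  assumes pd: "\<And>i v. ((\<lambda>r. G (v + r *\<^sub>R axis i 1)) has_real_derivative P i v) (at 0)"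
    and pc: "\<And>i. continuous_on UNIV (P i)"
  shows "(G has_derivative (\<lambda>w. \<Sum>i\<in>UNIV. w$i * P i x)) (at x)"
  unfolding has_derivative_at'
proof (intro conjI allI impI)
  have "linear (\<lambda>w. \<Sum>i\<in>UNIV. w$i * P i x)"
    by (rule linearI) (simp_all add: algebra_simps sum.distrib sum_distrib_left)
  then show "bounded_linear (\<lambda>w. \<Sum>i\<in>UNIV. w$i * P i x)"
    by (simp add: linear_conv_bounded_linear)
next
  fix e :: real assume e: "0 < e"
  define e' where "e' = e / (2 * (real CARD('n) + 1))"
  have e': "0 < e'" using e by (simp add: e'_def)
  have "\<forall>i. \<exists>d>0. \<forall>v. dist v x < d \<longrightarrow> dist (P i v) (P i x) < e'"
    using pc e' by (metis continuous_on_iff UNIV_I)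
  then obtain dd where dd: "\<And>i. dd i > 0" "\<And>i v. dist v x < dd i \<Longrightarrow> dist (P i v) (P i x) < e'"
    by metis
  define d where "d = Min (range dd)"
  have d: "0 < d" unfolding d_def using dd(1) by (subst Min_gr_iff) auto
  have dle: "d \<le> dd i" for i unfolding d_def by (rule Min_le) auto
  have shift: "DERIV (\<lambda>\<rho>. G (z + \<rho> *\<^sub>R axis a 1)) \<rho>0 :> P a (z + \<rho>0 *\<^sub>R axis a 1)" for z a \<rho>0
  proof -
    have "((\<lambda>r. G ((z + \<rho>0 *\<^sub>R axis a 1) + r *\<^sub>R axis a 1)) has_real_derivative P a (z + \<rho>0 *\<^sub>R axis a 1)) (at 0)"
      by (rule pd)
    moreover have "(\<lambda>r. G ((z + \<rho>0 *\<^sub>R axis a 1) + r *\<^sub>R axis a 1)) = (\<lambda>r. (\<lambda>\<rho>. G (z + \<rho> *\<^sub>R axis a 1)) (r + \<rho>0))"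
      by (simp add: algebra_simps scaleR_add_left)
    ultimately show ?thesis using DERIV_shift[of "\<lambda>\<rho>. G (z + \<rho> *\<^sub>R axis a 1)" _ 0 \<rho>0] by simp
  qed
  show "\<exists>d>0. \<forall>x'. 0 < norm (x' - x) \<and> norm (x' - x) < d \<longrightarrow>
          norm (G x' - G x - (\<Sum>i\<in>UNIV. (x' - x)$i * P i x)) / norm (x' - x) < e"
  proof (intro exI[of _ d] conjI allI impI d)
    fix x' assume x': "0 < norm (x' - x) \<and> norm (x' - x) < d"
    define v where "v = x' - x"
    define vA where "vA A = (\<chi> i. if i \<in> A then v$i else 0)" for A
    have vAle: "norm (vA A + r *\<^sub>R axis a 1) \<le> norm v" if "a \<notin> A" "\<bar>r\<bar> \<le> \<bar>v$a\<bar>" for A a r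
      using that by (intro norm_le_componentwise_cart) (auto simp: vA_def axis_def)
    have claim: "finite A \<Longrightarrow> \<bar>G (x + vA A) - G x - (\<Sum>i\<in>A. v$i * P i x)\<bar> \<le> e' * (\<Sum>i\<in>A. \<bar>v$i\<bar>)" for A
    proof (induction A rule: finite_induct)
      case empty
      have "vA {} = 0" by (simp add: vA_def vec_eq_iff)
      then show ?case by simp
    next
      case (insert a A)
      define z where "z = x + vA A"
      have eqv: "x + vA (insert a A) = z + (v$a) *\<^sub>R axis a 1"
        using insert by (simp add: z_def vA_def vec_eq_iff axis_def)
      define g where "g \<rho> = G (z + \<rho> *\<^sub>R axis a 1) - \<rho> * P a x" for \<rho>
      have "\<bar>g (v$a) - g 0\<bar> \<le> e' * \<bar>v$a\<bar>"
      proof (rule mvt_abs_bound)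
        fix \<rho> :: real assume r: "\<bar>\<rho>\<bar> \<le> \<bar>v$a\<bar>"
        show "DERIV g \<rho> :> P a (z + \<rho> *\<^sub>R axis a 1) - P a x"
          unfolding g_def by (intro derivative_eq_intros) (rule shift, auto)
        have "norm (z + \<rho> *\<^sub>R axis a 1 - x) \<le> norm v"
          using vAle[OF insert(2) r] by (simp add: z_def)
        also have "\<dots> < d" using x' by (simp add: v_def)
        finally have "dist (z + \<rho> *\<^sub>R axis a 1) x < dd a" using dle[of a] by (simp add: dist_norm)
        then show "\<bar>P a (z + \<rho> *\<^sub>R axis a 1) - P a x\<bar> \<le> e'"
          using dd(2) by (simp add: dist_real_def less_imp_le)
      qed
      then have "\<bar>G (x + vA (insert a A)) - G (x + vA A) - v$a * P a x\<bar> \<le> e' * \<bar>v$a\<bar>"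
        by (simp add: g_def eqv z_def)
      then show ?case using insert(3) insert(1,2)
        by (simp add: sum.insert distrib_left)
    qed
    have "vA UNIV = v" by (simp add: vA_def vec_eq_iff)
    then have "\<bar>G x' - G x - (\<Sum>i\<in>UNIV. v$i * P i x)\<bar> \<le> e' * (\<Sum>i\<in>UNIV. \<bar>v$i\<bar>)"
      using claim[of UNIV] by (simp add: v_def)
    also have "\<dots> \<le> e' * (\<Sum>i\<in>(UNIV::'n set). norm v)"
      using e' by (intro mult_left_mono sum_mono) (auto simp: component_le_norm_cart)
    also have "\<dots> = e' * real CARD('n) * norm v" by simp
    also have "\<dots> < e * norm v"
    proof -
      have "e' * real CARD('n) < e" using e unfolding e'_def by (simp add: field_simps add_pos_nonneg)
      then show ?thesis using x' by (simp add: v_def)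
    qed
    finally show "norm (G x' - G x - (\<Sum>i\<in>UNIV. (x' - x)$i * P i x)) / norm (x' - x) < e"
      using x' by (simp add: v_def divide_less_eq)
  qed
qed

definition Gd :: "(real^'n \<Rightarrow> real^'n) \<Rightarrow> 'n list \<Rightarrow> real^'n \<Rightarrow> real^'n" where
  "Gd D ds = fold partial_dir ds D"

lemma Gd_snoc: "Gd D (ds @ [i]) = partial_dir i (Gd D ds)"
  by (simp add: Gd_def)

lemma Gd_nil: "Gd D [] = D" by (simp add: Gd_def)

lemma Gd_cont: "smooth_vf D \<Longrightarrow> continuous_on UNIV (Gd D ds)"
  by (simp add: smooth_vf_def Gd_def)

lemma Gd_pd:
  assumes "smooth_vf D"
  shows "((\<lambda>r. Gd D ds (v + r *\<^sub>R axis i 1) $ j) has_real_derivative Gd D (ds @ [i]) v $ j) (at 0)"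
proof -
  have "(\<lambda>r. Gd D ds (v + r *\<^sub>R axis i 1)) differentiable (at 0)"
    using assms by (simp add: smooth_vf_def Gd_def)
  then have "((\<lambda>r. Gd D ds (v + r *\<^sub>R axis i 1)) has_vector_derivative Gd D (ds @ [i]) v) (at 0)"
    unfolding Gd_snoc partial_dir_def by (simp add: vector_derivative_works)
  then have "((\<lambda>r. Gd D ds (v + r *\<^sub>R axis i 1) $ j) has_vector_derivative Gd D (ds @ [i]) v $ j) (at 0)"
    by (rule bounded_linear.has_vector_derivative[OF bounded_linear_vec_nth])
  then show ?thesis by (simp add: has_real_derivative_iff_has_vector_derivative)
qed

lemma Gd_has_derivative:
  assumes "smooth_vf D"
  shows "((\<lambda>v. Gd D ds v $ j) has_derivative (\<lambda>w. \<Sum>i\<in>UNIV. w$i * Gd D (ds @ [i]) x $ j)) (at x)"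
  by (rule partials_has_derivative[where P="\<lambda>i v. Gd D (ds @ [i]) v $ j"])
     (auto intro: Gd_pd[OF assms] continuous_on_component Gd_cont[OF assms])

lemma Gd_chain:
  assumes "smooth_vf D" and xd: "(x has_vector_derivative x') (at t)"
  shows "DERIV (\<lambda>t. Gd D ds (x t) $ j) t :> (\<Sum>i\<in>UNIV. x'$i * Gd D (ds @ [i]) (x t) $ j)"
proof -
  have "(x has_derivative (\<lambda>r. r *\<^sub>R x')) (at t)" using xd by (simp add: has_vector_derivative_def)
  from diff_chain_at[OF this Gd_has_derivative[OF assms(1)]]
  have "((\<lambda>t. Gd D ds (x t) $ j) has_derivative
      (\<lambda>w. \<Sum>i\<in>UNIV. w$i * Gd D (ds @ [i]) (x t) $ j) \<circ> (\<lambda>r. r *\<^sub>R x')) (at t)"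
    by (simp add: o_def)
  moreover have "(\<lambda>w. \<Sum>i\<in>UNIV. w$i * Gd D (ds @ [i]) (x t) $ j) \<circ> (\<lambda>r. r *\<^sub>R x')
     = (*) (\<Sum>i\<in>UNIV. x'$i * Gd D (ds @ [i]) (x t) $ j)"
    by (rule ext) (simp add: sum_distrib_left sum_distrib_right algebra_simps)
  ultimately show ?thesis by (simp add: has_field_derivative_def)
qed

locale lts =
  fixes D :: "real^'n \<Rightarrow> real^'n" and y :: "real \<Rightarrow> real^'n" and blk :: "'n \<Rightarrow> 's::finite"
    and c \<delta> :: real
  assumes smooth: "smooth_vf D"
    and yder: "\<And>t. t \<in> ball c \<delta> \<Longrightarrow> (y has_vector_derivative D (y t)) (at t)"
    and ybnd: "\<And>t i. t \<in> ball c \<delta> \<Longrightarrow> \<bar>y t $ i - y c $ i\<bar> \<le> 1"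
    and dpos: "0 < \<delta>"
begin

definition zz :: "('s \<Rightarrow> real) \<Rightarrow> real^'n" where
  "zz \<sigma> = (\<chi> i. y (\<sigma> (blk i)) $ i)"

definition Kc :: "real \<Rightarrow> (real^'n) set" where
  "Kc r = cbox (y c - (\<chi> i. r)) (y c + (\<chi> i. r))"

lemma Kc_iff: "v \<in> Kc r \<longleftrightarrow> (\<forall>i. \<bar>v $ i - y c $ i\<bar> \<le> r)"
  unfolding Kc_def mem_box_cart by (auto simp: abs_le_iff algebra_simps)

lemma compact_Kc: "compact (Kc r)" by (simp add: Kc_def)
lemma convex_Kc: "convex (Kc r)" by (simp add: Kc_def)

lemma zz_in: "(\<And>s. \<sigma> s \<in> ball c \<delta>) \<Longrightarrow> zz \<sigma> \<in> Kc 1"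
  unfolding Kc_iff zz_def using ybnd by simp

lemma y_in: "t \<in> ball c \<delta> \<Longrightarrow> y t \<in> Kc 1"
  unfolding Kc_iff using ybnd by simp

lemma Gd_bounded: "\<exists>B. \<forall>v\<in>Kc r. \<bar>Gd D ds v $ j\<bar> \<le> B"
proof -
  have "compact ((\<lambda>v. Gd D ds v $ j) ` Kc r)"
    by (intro compact_continuous_image continuous_on_component continuous_on_subset[OF Gd_cont[OF smooth]] compact_Kc) auto
  then have "bounded ((\<lambda>v. Gd D ds v $ j) ` Kc r)" by (rule compact_imp_bounded)
  then show ?thesis by (auto simp: bounded_iff)
qed

inductive good :: "'s \<Rightarrow> (('s \<Rightarrow> real) \<Rightarrow> real \<Rightarrow> real) \<Rightarrow> bool" for s where
  gconst: "good s (\<lambda>\<sigma> t. r)"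
| gb1: "good s (\<lambda>\<sigma> t. Gd D ds (zz (\<sigma>(s := t))) $ j)"
| gb2: "good s (\<lambda>\<sigma> t. Gd D ds (y t) $ j)"
| gadd: "good s f \<Longrightarrow> good s g \<Longrightarrow> good s (\<lambda>\<sigma> t. f \<sigma> t + g \<sigma> t)"
| gmult: "good s f \<Longrightarrow> good s g \<Longrightarrow> good s (\<lambda>\<sigma> t. f \<sigma> t * g \<sigma> t)"

lemma good_sum: "finite A \<Longrightarrow> (\<And>i. i \<in> A \<Longrightarrow> good s (f i)) \<Longrightarrow> good s (\<lambda>\<sigma> t. \<Sum>i\<in>A. f i \<sigma> t)"
proof (induction A rule: finite_induct)
  case empty
  show ?case using gconst[of s 0] by simp
next
  case (insert a A)
  then show ?case using gadd[of s "f a" "\<lambda>\<sigma> t. \<Sum>i\<in>A. f i \<sigma> t"] by simp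
qed

lemma good_bounded:
  assumes "good s \<Phi>"
  shows "\<exists>M. \<forall>\<sigma> t. (\<forall>s'. \<sigma> s' \<in> ball c \<delta>) \<longrightarrow> t \<in> ball c \<delta> \<longrightarrow> \<bar>\<Phi> \<sigma> t\<bar> \<le> M"
  using assms
proof induction
  case (gconst r) then show ?case by blast
next
  case (gb1 ds j)
  obtain B where B: "\<forall>v\<in>Kc 1. \<bar>Gd D ds v $ j\<bar> \<le> B" using Gd_bounded by blast
  have "zz (\<sigma>(s := t)) \<in> Kc 1" if "\<forall>s'. \<sigma> s' \<in> ball c \<delta>" "t \<in> ball c \<delta>" for \<sigma> t
    by (rule zz_in) (use that in auto)
  then show ?case using B by blast
next
  case (gb2 ds j)
  obtain B where B: "\<forall>v\<in>Kc 1. \<bar>Gd D ds v $ j\<bar> \<le> B" using Gd_bounded by blast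
  then show ?case using y_in by blast
next
  case (gadd f g)
  then obtain M1 M2 where 1: "\<forall>\<sigma> t. (\<forall>s'. \<sigma> s' \<in> ball c \<delta>) \<longrightarrow> t \<in> ball c \<delta> \<longrightarrow> \<bar>f \<sigma> t\<bar> \<le> M1"
    and 2: "\<forall>\<sigma> t. (\<forall>s'. \<sigma> s' \<in> ball c \<delta>) \<longrightarrow> t \<in> ball c \<delta> \<longrightarrow> \<bar>g \<sigma> t\<bar> \<le> M2" by blast
  show ?case
  proof (intro exI[of _ "M1 + M2"] allI impI)
    fix \<sigma> :: "'s \<Rightarrow> real" and t :: real assume "\<forall>s'. \<sigma> s' \<in> ball c \<delta>" "t \<in> ball c \<delta>"
    then have "\<bar>f \<sigma> t\<bar> \<le> M1" "\<bar>g \<sigma> t\<bar> \<le> M2" using 1 2 by force+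
    then show "\<bar>f \<sigma> t + g \<sigma> t\<bar> \<le> M1 + M2" by (meson abs_triangle_ineq add_mono order.trans)
  qed
next
  case (gmult f g)
  then obtain M1 M2 where 1: "\<forall>\<sigma> t. (\<forall>s'. \<sigma> s' \<in> ball c \<delta>) \<longrightarrow> t \<in> ball c \<delta> \<longrightarrow> \<bar>f \<sigma> t\<bar> \<le> M1"
    and 2: "\<forall>\<sigma> t. (\<forall>s'. \<sigma> s' \<in> ball c \<delta>) \<longrightarrow> t \<in> ball c \<delta> \<longrightarrow> \<bar>g \<sigma> t\<bar> \<le> M2" by blast
  show ?case
  proof (intro exI[of _ "\<bar>M1\<bar> * \<bar>M2\<bar>"] allI impI)
    fix \<sigma> :: "'s \<Rightarrow> real" and t :: real assume "\<forall>s'. \<sigma> s' \<in> ball c \<delta>" "t \<in> ball c \<delta>"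
    then have "\<bar>f \<sigma> t\<bar> \<le> M1" "\<bar>g \<sigma> t\<bar> \<le> M2" using 1 2 by force+
    then have "\<bar>f \<sigma> t\<bar> \<le> \<bar>M1\<bar>" "\<bar>g \<sigma> t\<bar> \<le> \<bar>M2\<bar>" by linarith+
    then show "\<bar>f \<sigma> t * g \<sigma> t\<bar> \<le> \<bar>M1\<bar> * \<bar>M2\<bar>" unfolding abs_mult by (intro mult_mono) auto
  qed
qed

definition proj :: "'s \<Rightarrow> real^'n \<Rightarrow> real^'n" where
  "proj s v = (\<chi> i. if blk i = s then v $ i else 0)"

lemma bl_proj: "bounded_linear (proj s)"
proof -
  have "linear (proj s)" by (rule linearI) (auto simp: proj_def vec_eq_iff)
  then show ?thesis by (simp add: linear_conv_bounded_linear)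
qed

lemma zz_upd: "zz (\<sigma>(s := t)) = (\<chi> i. if blk i = s then 0 else y (\<sigma> (blk i)) $ i) + proj s (y t)"
  by (simp add: zz_def proj_def vec_eq_iff)

lemma zz_der:
  assumes "t \<in> ball c \<delta>"
  shows "((\<lambda>t. zz (\<sigma>(s := t))) has_vector_derivative proj s (D (y t))) (at t)"
proof -
  have "((\<lambda>t. proj s (y t)) has_vector_derivative proj s (D (y t))) (at t)"
    by (rule bounded_linear.has_vector_derivative[OF bl_proj yder[OF assms]])
  then have "((\<lambda>t. (\<chi> i. if blk i = s then 0 else y (\<sigma> (blk i)) $ i) + proj s (y t)) has_vector_derivative 0 + proj s (D (y t))) (at t)"
    by (rule has_vector_derivative_add[OF has_vector_derivative_const])
  then show ?thesis unfolding zz_upd by simp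
qed

lemma good_deriv:
  assumes "good s \<Phi>"
  shows "\<exists>\<Phi>'. good s \<Phi>' \<and> (\<forall>\<sigma> t. t \<in> ball c \<delta> \<longrightarrow> DERIV (\<Phi> \<sigma>) t :> \<Phi>' \<sigma> t)"
  using assms
proof induction
  case (gconst r)
  show ?case by (intro exI[of _ "\<lambda>\<sigma> t. 0"] conjI good.gconst allI impI) simp
next
  case (gb1 ds j)
  define \<Phi>' :: "('s \<Rightarrow> real) \<Rightarrow> real \<Rightarrow> real" where "\<Phi>' = (\<lambda>\<sigma> t. \<Sum>i\<in>UNIV. (if blk i = s then (\<lambda>\<sigma> t. Gd D [] (y t) $ i * Gd D (ds @ [i]) (zz (\<sigma>(s := t))) $ j) else (\<lambda>\<sigma> t. 0)) \<sigma> t)"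
  have "good s \<Phi>'" unfolding \<Phi>'_def
    by (intro good_sum) (auto intro: good.intros)
  moreover have "DERIV (\<lambda>t. Gd D ds (zz (\<sigma>(s := t))) $ j) t :> \<Phi>' \<sigma> t" if "t \<in> ball c \<delta>" for \<sigma> t
    by (rule DERIV_cong[OF Gd_chain[OF smooth zz_der[OF that]]])
       (auto simp: \<Phi>'_def proj_def Gd_nil intro!: sum.cong)
  ultimately show ?case by blast
next
  case (gb2 ds j)
  define \<Phi>' :: "('s \<Rightarrow> real) \<Rightarrow> real \<Rightarrow> real" where "\<Phi>' = (\<lambda>\<sigma> t. \<Sum>i\<in>UNIV. (\<lambda>\<sigma> t. Gd D [] (y t) $ i * Gd D (ds @ [i]) (y t) $ j) \<sigma> t)"
  have "good s \<Phi>'" unfolding \<Phi>'_def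
    by (intro good_sum) (auto intro: good.intros)
  moreover have "DERIV (\<lambda>t. Gd D ds (y t) $ j) t :> \<Phi>' \<sigma> t" if "t \<in> ball c \<delta>" for \<sigma> t
    by (rule DERIV_cong[OF Gd_chain[OF smooth yder[OF that]]])
       (auto simp: \<Phi>'_def Gd_nil)
  ultimately show ?case by blast
next
  case (gadd f g)
  then obtain f' g' where "good s f'" "\<forall>\<sigma> t. t \<in> ball c \<delta> \<longrightarrow> DERIV (f \<sigma>) t :> f' \<sigma> t"
    "good s g'" "\<forall>\<sigma> t. t \<in> ball c \<delta> \<longrightarrow> DERIV (g \<sigma>) t :> g' \<sigma> t" by blast
  then show ?case
    by (intro exI[of _ "\<lambda>\<sigma> t. f' \<sigma> t + g' \<sigma> t"] conjI good.gadd allI impI) (auto intro: DERIV_add)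
next
  case (gmult f g)
  then obtain f' g' where "good s f'" "\<forall>\<sigma> t. t \<in> ball c \<delta> \<longrightarrow> DERIV (f \<sigma>) t :> f' \<sigma> t"
    "good s g'" "\<forall>\<sigma> t. t \<in> ball c \<delta> \<longrightarrow> DERIV (g \<sigma>) t :> g' \<sigma> t" by blast
  then show ?case
    by (intro exI[of _ "\<lambda>\<sigma> t. f' \<sigma> t * g \<sigma> t + g' \<sigma> t * f \<sigma> t"] conjI good.gadd good.gmult allI impI)
       (auto intro: DERIV_mult \<open>good s f\<close> \<open>good s g\<close>)
qed

lemma good_chain:
  assumes "good s \<Phi>"
  shows "\<exists>d. d 0 = \<Phi> \<and> (\<forall>m. good s (d m)) \<and> (\<forall>m \<sigma> t. t \<in> ball c \<delta> \<longrightarrow> DERIV (d m \<sigma>) t :> d (Suc m) \<sigma> t)"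
proof -
  have "\<forall>\<Psi>. \<exists>\<Psi>'. good s \<Psi> \<longrightarrow> good s \<Psi>' \<and> (\<forall>\<sigma> t. t \<in> ball c \<delta> \<longrightarrow> DERIV (\<Psi> \<sigma>) t :> \<Psi>' \<sigma> t)"
    using good_deriv by blast
  then obtain nxt where nxt: "\<And>\<Psi>. good s \<Psi> \<Longrightarrow> good s (nxt \<Psi>) \<and> (\<forall>\<sigma> t. t \<in> ball c \<delta> \<longrightarrow> DERIV (\<Psi> \<sigma>) t :> nxt \<Psi> \<sigma> t)"
    by metis
  define d where "d m = (nxt ^^ m) \<Phi>" for m
  have g0: "good s ((nxt ^^ m) \<Phi>)" for m
  proof (induction m)
    case 0 show ?case using assms by simp
  next
    case (Suc m) show ?case using nxt[OF Suc.IH] by simp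
  qed
  have g: "good s (d m)" for m using g0 by (simp add: d_def)
  show ?thesis
    using g0 nxt[OF g0] by (intro exI[of _ d] conjI allI impI) (auto simp: d_def)
qed

end

context lts begin

lemma interp_block:
  assumes k: "0 < k"
  shows "\<exists>M. \<forall>\<sigma> t x \<rho> \<Lambda>. (\<forall>s'. \<sigma> s' \<in> ball c \<delta>) \<longrightarrow> t \<in> ball c \<delta> \<longrightarrow> inj_on x {..<k} \<longrightarrow>
     (\<forall>jj<k. x jj \<in> ball c \<delta> \<and> \<bar>x jj - t\<bar> \<le> \<rho> \<and> \<bar>lagr k x jj t\<bar> \<le> \<Lambda>) \<longrightarrow>
     \<bar>(\<Sum>jj<k. lagr k x jj t * D (zz (\<sigma>(s := x jj))) $ j) - D (zz (\<sigma>(s := t))) $ j\<bar>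
        \<le> real k * (\<Lambda> * (M / fact k * \<rho> ^ k))"
proof -
  have "good s (\<lambda>\<sigma> t. Gd D [] (zz (\<sigma>(s := t))) $ j)" by (rule gb1)
  then obtain d where d0: "d 0 = (\<lambda>\<sigma> t. Gd D [] (zz (\<sigma>(s := t))) $ j)" and dg: "\<And>m. good s (d m)"
    and dd: "\<And>m \<sigma> t. t \<in> ball c \<delta> \<Longrightarrow> DERIV (d m \<sigma>) t :> d (Suc m) \<sigma> t"
    using good_chain by blast
  obtain M where M: "\<And>\<sigma> t. (\<forall>s'. \<sigma> s' \<in> ball c \<delta>) \<Longrightarrow> t \<in> ball c \<delta> \<Longrightarrow> \<bar>d k \<sigma> t\<bar> \<le> M"
    using good_bounded[OF dg[of k]] by blast
  show ?thesis
  proof (intro exI[of _ M] allI impI)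
    fix \<sigma> :: "'s \<Rightarrow> real" and t :: real and x :: "nat \<Rightarrow> real" and \<rho> \<Lambda> :: real
    assume \<sigma>: "\<forall>s'. \<sigma> s' \<in> ball c \<delta>" and t: "t \<in> ball c \<delta>" and inj: "inj_on x {..<k}"
      and xs: "\<forall>jj<k. x jj \<in> ball c \<delta> \<and> \<bar>x jj - t\<bar> \<le> \<rho> \<and> \<bar>lagr k x jj t\<bar> \<le> \<Lambda>"
    have d0': "d 0 \<sigma> = (\<lambda>t. D (zz (\<sigma>(s := t))) $ j)" using d0 by (simp add: Gd_nil)
    have "\<bar>(\<Sum>jj<k. lagr k x jj t * (\<lambda>t. D (zz (\<sigma>(s := t))) $ j) (x jj)) - (\<lambda>t. D (zz (\<sigma>(s := t))) $ j) t\<bar>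
        \<le> real k * (\<Lambda> * (M / fact k * \<rho> ^ k))"
      by (rule interp_err[where diff="\<lambda>m. d m \<sigma>" and c=c and \<delta>=\<delta>, OF inj k d0'])
         (use dd M \<sigma> t xs in \<open>auto\<close>)
    then show "\<bar>(\<Sum>jj<k. lagr k x jj t * D (zz (\<sigma>(s := x jj))) $ j) - D (zz (\<sigma>(s := t))) $ j\<bar>
        \<le> real k * (\<Lambda> * (M / fact k * \<rho> ^ k))" by simp
  qed
qed

lemma interp_y:
  assumes k: "0 < k"
  shows "\<exists>M. \<forall>t x \<rho> \<Lambda>. t \<in> ball c \<delta> \<longrightarrow> inj_on x {..<k} \<longrightarrow>
     (\<forall>jj<k. x jj \<in> ball c \<delta> \<and> \<bar>x jj - t\<bar> \<le> \<rho> \<and> \<bar>lagr k x jj t\<bar> \<le> \<Lambda>) \<longrightarrow>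
     \<bar>(\<Sum>jj<k. lagr k x jj t * D (y (x jj)) $ j) - D (y t) $ j\<bar>
        \<le> real k * (\<Lambda> * (M / fact k * \<rho> ^ k))"
proof -
  obtain s :: 's where True by blast
  have "good s (\<lambda>\<sigma> t. Gd D [] (y t) $ j)" by (rule gb2)
  then obtain d where d0: "d 0 = (\<lambda>\<sigma> t. Gd D [] (y t) $ j)" and dg: "\<And>m. good s (d m)"
    and dd: "\<And>m \<sigma> t. t \<in> ball c \<delta> \<Longrightarrow> DERIV (d m \<sigma>) t :> d (Suc m) \<sigma> t"
    using good_chain by blast
  obtain M where M: "\<And>\<sigma> t. (\<forall>s'. \<sigma> s' \<in> ball c \<delta>) \<Longrightarrow> t \<in> ball c \<delta> \<Longrightarrow> \<bar>d k \<sigma> t\<bar> \<le> M"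
    using good_bounded[OF dg[of k]] by blast
  define \<sigma> where "\<sigma> = (\<lambda>_::'s. c)"
  have \<sigma>: "\<forall>s'. \<sigma> s' \<in> ball c \<delta>" using dpos by (simp add: \<sigma>_def)
  show ?thesis
  proof (intro exI[of _ M] allI impI)
    fix t :: real and x :: "nat \<Rightarrow> real" and \<rho> \<Lambda> :: real
    assume t: "t \<in> ball c \<delta>" and inj: "inj_on x {..<k}"
      and xs: "\<forall>jj<k. x jj \<in> ball c \<delta> \<and> \<bar>x jj - t\<bar> \<le> \<rho> \<and> \<bar>lagr k x jj t\<bar> \<le> \<Lambda>"
    have d0': "d 0 \<sigma> = (\<lambda>t. D (y t) $ j)" using d0 by (simp add: Gd_nil)
    have "\<bar>(\<Sum>jj<k. lagr k x jj t * (\<lambda>t. D (y t) $ j) (x jj)) - (\<lambda>t. D (y t) $ j) t\<bar>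
        \<le> real k * (\<Lambda> * (M / fact k * \<rho> ^ k))"
      by (rule interp_err[where diff="\<lambda>m. d m \<sigma>" and c=c and \<delta>=\<delta>, OF inj k d0'])
         (use dd M \<sigma> t xs in \<open>auto\<close>)
    then show "\<bar>(\<Sum>jj<k. lagr k x jj t * D (y (x jj)) $ j) - D (y t) $ j\<bar>
        \<le> real k * (\<Lambda> * (M / fact k * \<rho> ^ k))" by simp
  qed
qed

lemma D_lip: "\<exists>L. \<forall>u\<in>Kc 2. \<forall>w\<in>Kc 2. norm (D u - D w) \<le> L * norm (u - w)"
proof -
  have "\<forall>p::'n \<times> 'n. \<exists>B. \<forall>v\<in>Kc 2. \<bar>Gd D [fst p] v $ snd p\<bar> \<le> B"
    using Gd_bounded by blast
  then obtain Bf where Bf: "\<And>p v. v \<in> Kc 2 \<Longrightarrow> \<bar>Gd D [fst p] v $ snd p\<bar> \<le> Bf p" by metis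
  define B where "B = (\<Sum>p\<in>UNIV. \<bar>Bf p\<bar>)"
  have B: "\<bar>Gd D [i] v $ j\<bar> \<le> B" if "v \<in> Kc 2" for i j v
  proof -
    have "\<bar>Gd D [i] v $ j\<bar> \<le> \<bar>Bf (i, j)\<bar>" using Bf[OF that, of "(i,j)"] by simp
    also have "\<dots> \<le> B" unfolding B_def by (rule member_le_sum) auto
    finally show ?thesis .
  qed
  have B0: "0 \<le> B" unfolding B_def by (simp add: sum_nonneg)
  have comp: "\<bar>(D u - D w) $ j\<bar> \<le> real CARD('n) * B * norm (u - w)"
    if u: "u \<in> Kc 2" and w: "w \<in> Kc 2" for u w j
  proof -
    define x where "x r = w + r *\<^sub>R (u - w)" for r
    have xd: "(x has_vector_derivative (u - w)) (at r)" for r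
      unfolding x_def by (rule derivative_eq_intros | simp)+
    have der: "DERIV (\<lambda>r. Gd D [] (x r) $ j) r :> (\<Sum>i\<in>UNIV. (u - w)$i * Gd D ([] @ [i]) (x r) $ j)" for r
      by (rule Gd_chain[OF smooth xd])
    obtain z where z: "0 < z" "z < 1"
      "Gd D [] (x 1) $ j - Gd D [] (x 0) $ j = (1 - 0) * (\<Sum>i\<in>UNIV. (u - w)$i * Gd D ([] @ [i]) (x z) $ j)"
      using MVT2[of 0 1 "\<lambda>r. Gd D [] (x r) $ j", OF _ der] by auto
    have xz: "x z \<in> Kc 2"
    proof -
      have "x z = (1 - z) *\<^sub>R w + z *\<^sub>R u" by (simp add: x_def algebra_simps)
      then show ?thesis using convex_Kc[of 2] u w z unfolding convex_def
        by (metis diff_add_cancel diff_ge_0_iff_ge less_eq_real_def)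
    qed
    have "\<bar>(D u - D w) $ j\<bar> = \<bar>\<Sum>i\<in>UNIV. (u - w)$i * Gd D [i] (x z) $ j\<bar>"
      using z(3) by (simp add: x_def Gd_nil)
    also have "\<dots> \<le> (\<Sum>i\<in>UNIV. \<bar>(u - w)$i * Gd D [i] (x z) $ j\<bar>)" by (rule sum_abs)
    also have "\<dots> \<le> (\<Sum>i\<in>(UNIV::'n set). norm (u - w) * B)"
      by (rule sum_mono) (auto simp: abs_mult intro!: mult_mono B xz component_le_norm_cart[of "u - w", simplified])
    also have "\<dots> = real CARD('n) * B * norm (u - w)" by simp
    finally show ?thesis .
  qed
  show ?thesis
  proof (intro exI[of _ "real CARD('n) * (real CARD('n) * B)"] ballI)
    fix u w assume "u \<in> Kc 2" "w \<in> Kc 2"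
    have "norm (D u - D w) \<le> (\<Sum>j\<in>UNIV. \<bar>(D u - D w) $ j\<bar>)" by (rule norm_le_l1_cart)
    also have "\<dots> \<le> (\<Sum>j\<in>(UNIV::'n set). real CARD('n) * B * norm (u - w))"
      by (rule sum_mono) (rule comp[OF \<open>u \<in> Kc 2\<close> \<open>w \<in> Kc 2\<close>])
    also have "\<dots> = real CARD('n) * (real CARD('n) * B) * norm (u - w)" by simp
    finally show "norm (D u - D w) \<le> real CARD('n) * (real CARD('n) * B) * norm (u - w)" .
  qed
qed

end

lemma finite_JS: "finite {J :: 's::finite \<Rightarrow> nat. \<forall>s. J s < k}"
proof -
  have "{J :: 's \<Rightarrow> nat. \<forall>s. J s < k} = PiE UNIV (\<lambda>_. {..<k})"
    by (auto simp: PiE_def Pi_def extensional_def)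
  then show ?thesis by (simp add: finite_PiE)
qed

lemma sum_prod_JS:
  "(\<Sum>J\<in>{J :: 's::finite \<Rightarrow> nat. \<forall>s. J s < k}. \<Prod>s\<in>UNIV. f s (J s)) = (\<Prod>s\<in>UNIV. \<Sum>j<k. (f s j :: real))"
proof -
  have "{J :: 's \<Rightarrow> nat. \<forall>s. J s < k} = PiE UNIV (\<lambda>_. {..<k})"
    by (auto simp: PiE_def Pi_def extensional_def)
  then show ?thesis by (simp add: prod_sum_PiE)
qed

lemma sum_JS_split:
  fixes f :: "('s::finite \<Rightarrow> nat) \<Rightarrow> real"
  assumes k: "0 < k"
  shows "(\<Sum>J\<in>{J. \<forall>s. J s < k}. f J) = (\<Sum>J'\<in>{J. (\<forall>s. J s < k) \<and> J a = 0}. \<Sum>j<k. f (J'(a := j)))"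
proof -
  have "(\<Sum>J'\<in>{J. (\<forall>s. J s < k) \<and> J a = 0}. \<Sum>j<k. f (J'(a := j)))
      = (\<Sum>p\<in>{J. (\<forall>s. J s < k) \<and> J a = 0} \<times> {..<k}. f ((fst p)(a := snd p)))"
    by (simp add: sum.cartesian_product split_beta)
  also have "\<dots> = (\<Sum>J\<in>{J. \<forall>s. J s < k}. f J)"
    by (rule sum.reindex_bij_witness[where i="\<lambda>J. (J(a := 0), J a)" and j="\<lambda>p. (fst p)(a := snd p)"])
       (use k in auto)
  finally show ?thesis by simp
qed

lemma tensor_err:
  fixes F :: "('s::finite \<Rightarrow> real) \<Rightarrow> real" and \<nu> lw :: "'s \<Rightarrow> nat \<Rightarrow> real"
  assumes k: "0 < k"
    and sum1: "\<And>s. (\<Sum>j<k. lw s j) = 1"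
    and lbd: "\<And>s j. j < k \<Longrightarrow> \<bar>lw s j\<bar> \<le> \<Lambda>" and L1: "1 \<le> \<Lambda>"
    and tV: "t \<in> V" and nV: "\<And>s j. j < k \<Longrightarrow> \<nu> s j \<in> V"
    and err: "\<And>\<sigma> s. (\<forall>s'. \<sigma> s' \<in> V) \<Longrightarrow> \<bar>(\<Sum>j<k. lw s j * F (\<sigma>(s := \<nu> s j))) - F (\<sigma>(s := t))\<bar> \<le> \<epsilon>"
  shows "\<bar>(\<Sum>J\<in>{J. \<forall>s. J s < k}. (\<Prod>s\<in>UNIV. lw s (J s)) * F (\<lambda>s. \<nu> s (J s))) - F (\<lambda>_. t)\<bar>
     \<le> real CARD('s) * (real (card {J :: 's \<Rightarrow> nat. \<forall>s. J s < k}) * \<Lambda> ^ CARD('s) * \<epsilon>)"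
proof -
  define JS where "JS = {J :: 's \<Rightarrow> nat. \<forall>s. J s < k}"
  define W where "W = real (card JS) * \<Lambda> ^ CARD('s) * \<epsilon>"
  define w where "w J = (\<Prod>s\<in>UNIV. lw s (J s))" for J
  define \<sigma>A where "\<sigma>A A J = (\<lambda>s. if s \<in> A then \<nu> s (J s) else t)" for A J
  define G where "G A = (\<Sum>J\<in>JS. w J * F (\<sigma>A A J))" for A
  have finJS: "finite JS" unfolding JS_def by (rule finite_JS)
  have eps0: "0 \<le> \<epsilon>" using err[of "\<lambda>_. t" undefined] tV by (meson abs_ge_zero order.trans)
  have claim: "finite A \<Longrightarrow> \<bar>G A - F (\<lambda>_. t)\<bar> \<le> real (card A) * W" for A :: "'s set"
  proof (induction A rule: finite_induct)
    case empty
    have "G {} = (\<Sum>J\<in>JS. w J) * F (\<lambda>_. t)"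
      by (simp add: G_def \<sigma>A_def sum_distrib_right)
    also have "(\<Sum>J\<in>JS. w J) = 1"
      unfolding JS_def w_def sum_prod_JS by (simp add: sum1)
    finally show ?case by simp
  next
    case (insert a A)
    define JS0 where "JS0 = {J. (\<forall>s. J s < k) \<and> J a = (0::nat)}"
    define wa where "wa J = (\<Prod>s\<in>UNIV - {a}. lw s (J s))" for J
    have wsplit: "w (J'(a := j)) = lw a j * wa J'" for J' j
    proof -
      have "w (J'(a := j)) = lw a ((J'(a := j)) a) * (\<Prod>s\<in>UNIV - {a}. lw s ((J'(a := j)) s))"
        unfolding w_def by (rule prod.remove) auto
      also have "(\<Prod>s\<in>UNIV - {a}. lw s ((J'(a := j)) s)) = wa J'"
        unfolding wa_def by (intro prod.cong) auto
      finally show ?thesis by (simp only: fun_upd_same)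
    qed
    have s1: "\<sigma>A (insert a A) (J'(a := j)) = (\<sigma>A A J')(a := \<nu> a j)" for J' j
      using insert(2) by (auto simp: \<sigma>A_def)
    have s2: "\<sigma>A A (J'(a := j)) = \<sigma>A A J'" for J' j
      using insert(2) by (auto simp: \<sigma>A_def)
    have s3: "(\<sigma>A A J')(a := t) = \<sigma>A A J'" for J'
      using insert(2) by (auto simp: \<sigma>A_def)
    have "G (insert a A) - G A = (\<Sum>J\<in>JS. w J * (F (\<sigma>A (insert a A) J) - F (\<sigma>A A J)))"
      by (simp add: G_def sum_subtractf algebra_simps)
    also have "\<dots> = (\<Sum>J'\<in>JS0. \<Sum>j<k. w (J'(a := j)) * (F (\<sigma>A (insert a A) (J'(a := j))) - F (\<sigma>A A (J'(a := j)))))"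
      unfolding JS_def JS0_def by (rule sum_JS_split[OF k])
    also have "\<dots> = (\<Sum>J'\<in>JS0. wa J' * ((\<Sum>j<k. lw a j * F ((\<sigma>A A J')(a := \<nu> a j))) - F ((\<sigma>A A J')(a := t))))"
    proof (rule sum.cong[OF refl])
      fix J' assume "J' \<in> JS0"
      have "(\<Sum>j<k. w (J'(a := j)) * (F (\<sigma>A (insert a A) (J'(a := j))) - F (\<sigma>A A (J'(a := j)))))
          = (\<Sum>j<k. wa J' * (lw a j * F ((\<sigma>A A J')(a := \<nu> a j))) - wa J' * (lw a j * F (\<sigma>A A J')))"
        by (intro sum.cong refl) (simp add: wsplit s1 s2 algebra_simps)
      also have "\<dots> = wa J' * (\<Sum>j<k. lw a j * F ((\<sigma>A A J')(a := \<nu> a j))) - wa J' * ((\<Sum>j<k. lw a j) * F (\<sigma>A A J'))"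
        by (simp add: sum_subtractf sum_distrib_left sum_distrib_right)
      also have "\<dots> = wa J' * ((\<Sum>j<k. lw a j * F ((\<sigma>A A J')(a := \<nu> a j))) - F ((\<sigma>A A J')(a := t)))"
        by (simp add: sum1 s3 algebra_simps)
      finally show "(\<Sum>j<k. w (J'(a := j)) * (F (\<sigma>A (insert a A) (J'(a := j))) - F (\<sigma>A A (J'(a := j)))))
          = wa J' * ((\<Sum>j<k. lw a j * F ((\<sigma>A A J')(a := \<nu> a j))) - F ((\<sigma>A A J')(a := t)))" .
    qed
    finally have eq: "G (insert a A) - G A = (\<Sum>J'\<in>JS0. wa J' * ((\<Sum>j<k. lw a j * F ((\<sigma>A A J')(a := \<nu> a j))) - F ((\<sigma>A A J')(a := t))))" .
    have JS0sub: "JS0 \<subseteq> JS" by (auto simp: JS0_def JS_def)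
    have "\<bar>G (insert a A) - G A\<bar> \<le> (\<Sum>J'\<in>JS0. \<Lambda> ^ CARD('s) * \<epsilon>)"
      unfolding eq
    proof (rule order.trans[OF sum_abs], rule sum_mono)
      fix J' assume J': "J' \<in> JS0"
      have "\<bar>wa J'\<bar> = (\<Prod>s\<in>UNIV - {a}. \<bar>lw s (J' s)\<bar>)" by (simp add: wa_def abs_prod)
      also have "\<dots> \<le> \<Lambda> ^ CARD('s)"
        by (rule prod_le_power) (use J' lbd L1 in \<open>auto simp: JS0_def card_Diff_subset\<close>)
      finally have wab: "\<bar>wa J'\<bar> \<le> \<Lambda> ^ CARD('s)" .
      have "\<forall>s'. \<sigma>A A J' s' \<in> V" using J' tV nV by (auto simp: \<sigma>A_def JS0_def)
      then have eb: "\<bar>(\<Sum>j<k. lw a j * F ((\<sigma>A A J')(a := \<nu> a j))) - F ((\<sigma>A A J')(a := t))\<bar> \<le> \<epsilon>"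
        by (rule err)
      show "\<bar>wa J' * ((\<Sum>j<k. lw a j * F ((\<sigma>A A J')(a := \<nu> a j))) - F ((\<sigma>A A J')(a := t)))\<bar> \<le> \<Lambda> ^ CARD('s) * \<epsilon>"
        unfolding abs_mult by (rule mult_mono[OF wab eb]) (use L1 in auto)
    qed
    also have "\<dots> = real (card JS0) * \<Lambda> ^ CARD('s) * \<epsilon>" by simp
    also have "\<dots> \<le> W" unfolding W_def
      using card_mono[OF finJS JS0sub] eps0 L1 by (intro mult_right_mono) auto
    finally have step: "\<bar>G (insert a A) - G A\<bar> \<le> W" .
    show ?case using step insert(3) insert(1,2) by (simp add: algebra_simps)
  qed
  have "G UNIV = (\<Sum>J\<in>JS. (\<Prod>s\<in>UNIV. lw s (J s)) * F (\<lambda>s. \<nu> s (J s)))"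
    by (simp add: G_def w_def \<sigma>A_def)
  then show ?thesis using claim[of UNIV] finite[of UNIV] by (simp add: JS_def W_def)
qed

lemma substep_decomp:
  fixes D :: "real^'n \<Rightarrow> real^'n" and blk :: "'n \<Rightarrow> 's::finite"
  assumes "tn \<noteq> tp 0"
  shows "lts_substep k blk D tn tp ts Yv =
    (\<Sum>i<k. integral {tp 0..tn} (lagr k tp i) *\<^sub>R
       (\<Sum>J\<in>{J. \<forall>s. J s < k}. (\<Prod>s\<in>UNIV. lagr k (ts s) (J s) (tp i)) *\<^sub>R D (\<chi> i'. Yv (blk i') (J (blk i')) $ i')))"
proof -
  let ?JS = "{J :: 's \<Rightarrow> nat. \<forall>s. J s < k}"
  let ?I = "\<lambda>i. integral {tp 0..tn} (lagr k tp i)"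
  let ?w = "\<lambda>i J. (\<Prod>s\<in>UNIV. lagr k (ts s) (J s) (tp i))"
  let ?DJ = "\<lambda>J. D (\<chi> i'. Yv (blk i') (J (blk i')) $ i')"
  have beta: "lts_beta k tn tp ts J = (\<Sum>i<k. ?I i * ?w i J)" for J
  proof -
    have ne: "tn - tp 0 \<noteq> 0" using assms by simp
    show ?thesis unfolding lts_beta_def ab_alpha_def sum_distrib_left
      by (intro sum.cong refl) (use ne in \<open>simp add: field_simps\<close>)
  qed
  have "lts_substep k blk D tn tp ts Yv = (\<Sum>J\<in>?JS. (\<Sum>i<k. ?I i * ?w i J) *\<^sub>R ?DJ J)"
    unfolding lts_substep_def beta ..
  also have "\<dots> = (\<Sum>J\<in>?JS. \<Sum>i<k. ?I i *\<^sub>R (?w i J *\<^sub>R ?DJ J))"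
    by (simp add: scaleR_sum_left)
  also have "\<dots> = (\<Sum>i<k. \<Sum>J\<in>?JS. ?I i *\<^sub>R (?w i J *\<^sub>R ?DJ J))"
    by (rule sum.swap)
  also have "\<dots> = (\<Sum>i<k. ?I i *\<^sub>R (\<Sum>J\<in>?JS. ?w i J *\<^sub>R ?DJ J))"
    by (simp add: scaleR_sum_right)
  finally show ?thesis .
qed

lemma ab_integral_err:
  fixes y :: "real \<Rightarrow> 'a::banach" and g :: "real \<Rightarrow> 'a"
  assumes le: "t0 \<le> tn"
    and yd: "\<And>t. t \<in> {t0..tn} \<Longrightarrow> (y has_vector_derivative g t) (at t)"
    and bd: "\<And>t. t \<in> {t0..tn} \<Longrightarrow> norm ((\<Sum>i<k. lagr k tp i t *\<^sub>R v i) - g t) \<le> E"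
  shows "norm ((\<Sum>i<k. integral {t0..tn} (lagr k tp i) *\<^sub>R v i) - (y tn - y t0)) \<le> E * (tn - t0)"
proof -
  have li: "(lagr k tp i has_integral integral {t0..tn} (lagr k tp i)) {t0..tn}" for i
    by (intro integrable_integral integrable_continuous_interval continuous_lagr)
  have s: "((\<lambda>t. \<Sum>i<k. lagr k tp i t *\<^sub>R v i) has_integral (\<Sum>i<k. integral {t0..tn} (lagr k tp i) *\<^sub>R v i)) {t0..tn}"
    by (intro has_integral_sum has_integral_scaleR_left li) auto
  have f: "(g has_integral (y tn - y t0)) {t0..tn}"
    by (rule fundamental_theorem_of_calculus[OF le]) (metis has_vector_derivative_at_within yd)
  have E0: "0 \<le> E" using bd[of t0] le by (meson atLeastAtMost_iff dual_order.refl norm_ge_zero order.trans)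
  have X: "\<And>t. t \<in> {t0..tn} - {} \<Longrightarrow> norm ((\<Sum>i<k. lagr k tp i t *\<^sub>R v i) - g t) \<le> E" using bd by auto
  show ?thesis using has_integral_bound_real[OF E0 finite.emptyI has_integral_diff[OF s f] X] le by simp
qed

lemma integral_lagr_bound:
  assumes le: "t0 \<le> tn" and bd: "\<And>t. t \<in> {t0..tn} \<Longrightarrow> \<bar>lagr k tp i t\<bar> \<le> B"
  shows "\<bar>integral {t0..tn} (lagr k tp i)\<bar> \<le> B * (tn - t0)"
proof -
  have li: "(lagr k tp i has_integral integral {t0..tn} (lagr k tp i)) {t0..tn}"
    by (intro integrable_integral integrable_continuous_interval continuous_lagr)
  have B0: "0 \<le> B" using bd[of t0] le by (meson atLeastAtMost_iff dual_order.refl abs_ge_zero order.trans)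
  have X: "\<And>t. t \<in> {t0..tn} - {} \<Longrightarrow> norm (lagr k tp i t) \<le> B" using bd by auto
  show ?thesis using has_integral_bound_real[OF B0 finite.emptyI li X] le by simp
qed

lemma finite_bound_combine:
  fixes f :: "'i \<Rightarrow> 'x \<Rightarrow> real"
  assumes "finite I" "\<And>p. p \<in> I \<Longrightarrow> \<exists>B. \<forall>x\<in>S. \<bar>f p x\<bar> \<le> B"
  shows "\<exists>B. 1 \<le> B \<and> (\<forall>p\<in>I. \<forall>x\<in>S. \<bar>f p x\<bar> \<le> B)"
  using assms
proof (induction I rule: finite_induct)
  case empty then show ?case by auto
next
  case (insert a I)
  then obtain B1 where B1: "1 \<le> B1" "\<forall>p\<in>I. \<forall>x\<in>S. \<bar>f p x\<bar> \<le> B1" by blast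
  obtain B2 where B2: "\<forall>x\<in>S. \<bar>f a x\<bar> \<le> B2" using insert(4) by blast
  show ?case
    by (rule exI[of _ "max B1 B2"]) (use B1 B2 in \<open>auto intro: le_max_iff_disj[THEN iffD2]\<close>)
qed

lemma lagr_bounded: "\<exists>B. \<forall>\<theta>\<in>{-R..R}. \<bar>lagr k x j \<theta>\<bar> \<le> B"
proof -
  have "compact (lagr k x j ` {-R..R})"
    by (intro compact_continuous_image continuous_lagr compact_Icc)
  then have "bounded (lagr k x j ` {-R..R})" by (rule compact_imp_bounded)
  then show ?thesis by (auto simp: bounded_iff)
qed

lemma dec_lt:
  assumes "\<forall>i. Suc i < k \<longrightarrow> a (Suc i) < (a i :: real)" "i < j" "j < k"
  shows "a j < a i"
  using assms(2,3)
proof (induction j)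
  case 0 then show ?case by simp
next
  case (Suc j)
  then show ?case using assms(1)
    by (metis less_Suc_eq order.strict_trans Suc_lessD)
qed

lemma dec_inj:
  assumes "\<forall>i. Suc i < k \<longrightarrow> a (Suc i) < (a i :: real)" "h \<noteq> 0"
  shows "inj_on (\<lambda>i. c + h * a i) {..<k}"
proof (rule inj_onI)
  fix i j assume i: "i \<in> {..<k}" and j: "j \<in> {..<k}" and eq: "c + h * a i = c + h * a j"
  then have "a i = a j" using assms(2) by simp
  then show "i = j" using dec_lt[OF assms(1)] i j by (metis lessThan_iff linorder_neqE_nat less_irrefl)
qed

lemma prod_abs_le:
  fixes f :: "'s::finite \<Rightarrow> real"
  assumes "\<And>s. \<bar>f s\<bar> \<le> \<Lambda>" "1 \<le> \<Lambda>"
  shows "\<bar>\<Prod>s\<in>UNIV. f s\<bar> \<le> \<Lambda> ^ CARD('s)"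
  unfolding abs_prod by (rule prod_le_power) (use assms in auto)

context lts begin

lemma zz_const: "zz (\<lambda>_. t) = y t"
  by (simp add: zz_def vec_eq_iff)


lemma interp_block_unif:
  assumes k: "0 < k"
  shows "\<exists>M. \<forall>s j \<sigma> t x \<rho> \<Lambda>. (\<forall>s'. \<sigma> s' \<in> ball c \<delta>) \<longrightarrow> t \<in> ball c \<delta> \<longrightarrow> inj_on x {..<k} \<longrightarrow>
     (\<forall>jj<k. x jj \<in> ball c \<delta> \<and> \<bar>x jj - t\<bar> \<le> \<rho> \<and> \<bar>lagr k x jj t\<bar> \<le> \<Lambda>) \<longrightarrow>
     \<bar>(\<Sum>jj<k. lagr k x jj t * D (zz (\<sigma>(s := x jj))) $ j) - D (zz (\<sigma>(s := t))) $ j\<bar>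
        \<le> real k * (\<Lambda> * (M / fact k * \<rho> ^ k))"
proof -
  have "\<forall>p::'s \<times> 'n. \<exists>M. \<forall>\<sigma> t x \<rho> \<Lambda>. (\<forall>s'. \<sigma> s' \<in> ball c \<delta>) \<longrightarrow> t \<in> ball c \<delta> \<longrightarrow> inj_on x {..<k} \<longrightarrow>
     (\<forall>jj<k. x jj \<in> ball c \<delta> \<and> \<bar>x jj - t\<bar> \<le> \<rho> \<and> \<bar>lagr k x jj t\<bar> \<le> \<Lambda>) \<longrightarrow>
     \<bar>(\<Sum>jj<k. lagr k x jj t * D (zz (\<sigma>(fst p := x jj))) $ snd p) - D (zz (\<sigma>(fst p := t))) $ snd p\<bar>
        \<le> real k * (\<Lambda> * (M / fact k * \<rho> ^ k))"
    using interp_block[OF k] by blast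
  from choice[OF this] obtain Mf where Mf: "\<forall>p \<sigma> t x \<rho> \<Lambda>. (\<forall>s'. \<sigma> s' \<in> ball c \<delta>) \<longrightarrow> t \<in> ball c \<delta> \<longrightarrow> inj_on x {..<k} \<longrightarrow>
     (\<forall>jj<k. x jj \<in> ball c \<delta> \<and> \<bar>x jj - t\<bar> \<le> \<rho> \<and> \<bar>lagr k x jj t\<bar> \<le> \<Lambda>) \<longrightarrow>
     \<bar>(\<Sum>jj<k. lagr k x jj t * D (zz (\<sigma>(fst p := x jj))) $ snd p) - D (zz (\<sigma>(fst p := t))) $ snd p\<bar>
        \<le> real k * (\<Lambda> * (Mf p / fact k * \<rho> ^ k))"
    by blast
  define M where "M = (\<Sum>p\<in>UNIV. \<bar>Mf p\<bar>)"
  have MM: "Mf p \<le> M" for p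
  proof -
    have "\<bar>Mf p\<bar> \<le> M" unfolding M_def by (rule member_le_sum) auto
    then show ?thesis by linarith
  qed
  show ?thesis
  proof (intro exI[of _ M] allI impI)
    fix s :: 's and j :: 'n and \<sigma> :: "'s \<Rightarrow> real" and t :: real and x :: "nat \<Rightarrow> real" and \<rho> \<Lambda> :: real
    assume h1: "\<forall>s'. \<sigma> s' \<in> ball c \<delta>" and h2: "t \<in> ball c \<delta>" and h3: "inj_on x {..<k}"
      and h4: "\<forall>jj<k. x jj \<in> ball c \<delta> \<and> \<bar>x jj - t\<bar> \<le> \<rho> \<and> \<bar>lagr k x jj t\<bar> \<le> \<Lambda>"
    have r0: "0 \<le> \<rho>" "0 \<le> \<Lambda>" using h4 k by (meson abs_ge_zero order.trans)+
    have "\<bar>(\<Sum>jj<k. lagr k x jj t * D (zz (\<sigma>(s := x jj))) $ j) - D (zz (\<sigma>(s := t))) $ j\<bar>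
        \<le> real k * (\<Lambda> * (Mf (s, j) / fact k * \<rho> ^ k))"
      using Mf[THEN spec[of _ "(s,j)"], THEN spec[of _ \<sigma>], THEN spec[of _ t], THEN spec[of _ x], THEN spec[of _ \<rho>], THEN spec[of _ \<Lambda>]] h1 h2 h3 h4 by simp
    also have "\<dots> \<le> real k * (\<Lambda> * (M / fact k * \<rho> ^ k))"
      using MM[of "(s,j)"] r0
      by (intro mult_left_mono mult_right_mono divide_right_mono) auto
    finally show "\<bar>(\<Sum>jj<k. lagr k x jj t * D (zz (\<sigma>(s := x jj))) $ j) - D (zz (\<sigma>(s := t))) $ j\<bar>
        \<le> real k * (\<Lambda> * (M / fact k * \<rho> ^ k))" .
  qed
qed

lemma interp_y_unif:
  assumes k: "0 < k"
  shows "\<exists>M. \<forall>j t x \<rho> \<Lambda>. t \<in> ball c \<delta> \<longrightarrow> inj_on x {..<k} \<longrightarrow>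
     (\<forall>jj<k. x jj \<in> ball c \<delta> \<and> \<bar>x jj - t\<bar> \<le> \<rho> \<and> \<bar>lagr k x jj t\<bar> \<le> \<Lambda>) \<longrightarrow>
     \<bar>(\<Sum>jj<k. lagr k x jj t * D (y (x jj)) $ j) - D (y t) $ j\<bar>
        \<le> real k * (\<Lambda> * (M / fact k * \<rho> ^ k))"
proof -
  have "\<forall>j. \<exists>M. \<forall>t x \<rho> \<Lambda>. t \<in> ball c \<delta> \<longrightarrow> inj_on x {..<k} \<longrightarrow>
     (\<forall>jj<k. x jj \<in> ball c \<delta> \<and> \<bar>x jj - t\<bar> \<le> \<rho> \<and> \<bar>lagr k x jj t\<bar> \<le> \<Lambda>) \<longrightarrow>
     \<bar>(\<Sum>jj<k. lagr k x jj t * D (y (x jj)) $ j) - D (y t) $ j\<bar>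
        \<le> real k * (\<Lambda> * (M / fact k * \<rho> ^ k))"
    using interp_y[OF k] by blast
  from choice[OF this] obtain Mf where Mf: "\<forall>j t x \<rho> \<Lambda>. t \<in> ball c \<delta> \<longrightarrow> inj_on x {..<k} \<longrightarrow>
     (\<forall>jj<k. x jj \<in> ball c \<delta> \<and> \<bar>x jj - t\<bar> \<le> \<rho> \<and> \<bar>lagr k x jj t\<bar> \<le> \<Lambda>) \<longrightarrow>
     \<bar>(\<Sum>jj<k. lagr k x jj t * D (y (x jj)) $ j) - D (y t) $ j\<bar>
        \<le> real k * (\<Lambda> * (Mf j / fact k * \<rho> ^ k))"
    by blast
  define M where "M = (\<Sum>p\<in>UNIV. \<bar>Mf p\<bar>)"
  have MM: "Mf p \<le> M" for p
  proof -
    have "\<bar>Mf p\<bar> \<le> M" unfolding M_def by (rule member_le_sum) auto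
    then show ?thesis by linarith
  qed
  show ?thesis
  proof (intro exI[of _ M] allI impI)
    fix j :: 'n and t :: real and x :: "nat \<Rightarrow> real" and \<rho> \<Lambda> :: real
    assume h2: "t \<in> ball c \<delta>" and h3: "inj_on x {..<k}"
      and h4: "\<forall>jj<k. x jj \<in> ball c \<delta> \<and> \<bar>x jj - t\<bar> \<le> \<rho> \<and> \<bar>lagr k x jj t\<bar> \<le> \<Lambda>"
    have r0: "0 \<le> \<rho>" "0 \<le> \<Lambda>" using h4 k by (meson abs_ge_zero order.trans)+
    have "\<bar>(\<Sum>jj<k. lagr k x jj t * D (y (x jj)) $ j) - D (y t) $ j\<bar>
        \<le> real k * (\<Lambda> * (Mf j / fact k * \<rho> ^ k))"
      using Mf[THEN spec[of _ j], THEN spec[of _ t], THEN spec[of _ x], THEN spec[of _ \<rho>], THEN spec[of _ \<Lambda>]] h2 h3 h4 by simp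
    also have "\<dots> \<le> real k * (\<Lambda> * (M / fact k * \<rho> ^ k))"
      using MM[of j] r0
      by (intro mult_left_mono mult_right_mono divide_right_mono) auto
    finally show "\<bar>(\<Sum>jj<k. lagr k x jj t * D (y (x jj)) $ j) - D (y t) $ j\<bar>
        \<le> real k * (\<Lambda> * (M / fact k * \<rho> ^ k))" .
  qed
qed

end

context lts begin

lemma core:
  fixes a :: "nat \<Rightarrow> real" and b :: "'s \<Rightarrow> nat \<Rightarrow> real" and a1 R CY :: real
  assumes k1: "1 \<le> k"
    and adec: "\<forall>i. Suc i < k \<longrightarrow> a (Suc i) < a i"
    and bdec: "\<forall>s j. Suc j < k \<longrightarrow> b s (Suc j) < b s j"
    and a01: "a 0 < a1"
    and R1: "1 \<le> R" and Ra: "\<And>i. i < k \<Longrightarrow> \<bar>a i\<bar> \<le> R" and Ra1: "\<bar>a1\<bar> \<le> R"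
    and Rb: "\<And>s j. j < k \<Longrightarrow> \<bar>b s j\<bar> \<le> R"
    and CY0: "0 \<le> CY"
  shows "\<exists>K. \<forall>h Yv. 0 < h \<longrightarrow> h * R < \<delta> \<longrightarrow> CY * h ^ k \<le> 1 \<longrightarrow>
     (\<forall>s j i. j < k \<longrightarrow> blk i = s \<longrightarrow> \<bar>Yv s j $ i - y (c + h * b s j) $ i\<bar> \<le> CY * h ^ k) \<longrightarrow>
     norm (lts_substep k blk D (c + h * a1) (\<lambda>i. c + h * a i) (\<lambda>s j. c + h * b s j) Yv
        - (y (c + h * a1) - y (c + h * a 0))) \<le> K * h ^ (k + 1)"
proof -
  have k: "0 < k" using k1 by simp
  have "\<And>p. p \<in> UNIV \<times> {..<k} \<Longrightarrow> \<exists>B. \<forall>\<theta>\<in>{-R..R}. \<bar>lagr k (b (fst p)) (snd p) \<theta>\<bar> \<le> B"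
    using lagr_bounded by blast
  from finite_bound_combine[where I="UNIV \<times> {..<k}" and S="{-R..R}" and f="\<lambda>p. lagr k (b (fst p)) (snd p)", OF _ this] obtain \<Lambda>1 where L1: "1 \<le> \<Lambda>1"
    and L1b: "\<forall>p\<in>UNIV \<times> {..<k}. \<forall>\<theta>\<in>{-R..R}. \<bar>lagr k (b (fst p)) (snd p) \<theta>\<bar> \<le> \<Lambda>1"
    by auto
  have "\<And>p. p \<in> {..<k} \<Longrightarrow> \<exists>B. \<forall>\<theta>\<in>{-R..R}. \<bar>lagr k a p \<theta>\<bar> \<le> B"
    using lagr_bounded by blast
  from finite_bound_combine[where I="{..<k}" and S="{-R..R}" and f="\<lambda>p. lagr k a p", OF _ this] obtain \<Lambda>2 where L2: "1 \<le> \<Lambda>2"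
    and L2b: "\<forall>p\<in>{..<k}. \<forall>\<theta>\<in>{-R..R}. \<bar>lagr k a p \<theta>\<bar> \<le> \<Lambda>2"
    by auto
  define \<Lambda> where "\<Lambda> = max \<Lambda>1 \<Lambda>2"
  have \<Lambda>1: "1 \<le> \<Lambda>" using L1 by (simp add: \<Lambda>_def)
  have lb: "\<bar>lagr k (b s) j \<theta>\<bar> \<le> \<Lambda>" if "j < k" "\<bar>\<theta>\<bar> \<le> R" for s j \<theta>
  proof -
    have "(s, j) \<in> UNIV \<times> {..<k}" "\<theta> \<in> {-R..R}" using that by (auto simp: abs_le_iff)
    then have "\<bar>lagr k (b s) j \<theta>\<bar> \<le> \<Lambda>1" using L1b by fastforce
    then show ?thesis unfolding \<Lambda>_def by linarith
  qed
  have la: "\<bar>lagr k a i \<theta>\<bar> \<le> \<Lambda>" if "i < k" "\<bar>\<theta>\<bar> \<le> R" for i \<theta>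
  proof -
    have "i \<in> {..<k}" "\<theta> \<in> {-R..R}" using that by (auto simp: abs_le_iff)
    then have "\<bar>lagr k a i \<theta>\<bar> \<le> \<Lambda>2" using L2b by fastforce
    then show ?thesis unfolding \<Lambda>_def by linarith
  qed
  obtain Mb where Mb: "\<forall>s j \<sigma> t x \<rho> \<Lambda>. (\<forall>s'. \<sigma> s' \<in> ball c \<delta>) \<longrightarrow> t \<in> ball c \<delta> \<longrightarrow> inj_on x {..<k} \<longrightarrow>
     (\<forall>jj<k. x jj \<in> ball c \<delta> \<and> \<bar>x jj - t\<bar> \<le> \<rho> \<and> \<bar>lagr k x jj t\<bar> \<le> \<Lambda>) \<longrightarrow>
     \<bar>(\<Sum>jj<k. lagr k x jj t * D (zz (\<sigma>(s := x jj))) $ j) - D (zz (\<sigma>(s := t))) $ j\<bar>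
        \<le> real k * (\<Lambda> * (Mb / fact k * \<rho> ^ k))"
    using interp_block_unif[OF k] by blast
  obtain My where My: "\<forall>j t x \<rho> \<Lambda>. t \<in> ball c \<delta> \<longrightarrow> inj_on x {..<k} \<longrightarrow>
     (\<forall>jj<k. x jj \<in> ball c \<delta> \<and> \<bar>x jj - t\<bar> \<le> \<rho> \<and> \<bar>lagr k x jj t\<bar> \<le> \<Lambda>) \<longrightarrow>
     \<bar>(\<Sum>jj<k. lagr k x jj t * D (y (x jj)) $ j) - D (y t) $ j\<bar>
        \<le> real k * (\<Lambda> * (My / fact k * \<rho> ^ k))"
    using interp_y_unif[OF k] by blast
  obtain L where L: "\<forall>u\<in>Kc 2. \<forall>w\<in>Kc 2. norm (D u - D w) \<le> L * norm (u - w)"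
    using D_lip by blast
  define JS where "JS = {J :: 's \<Rightarrow> nat. \<forall>s. J s < k}"
  define S where "S = real CARD('s)"
  define N where "N = real CARD('n)"
  define NJ where "NJ = real (card JS)"
  define P where "P = (2 * R) ^ k"
  define eb where "eb = real k * (\<Lambda> * (Mb / fact k * P))"
  define ey where "ey = real k * (\<Lambda> * (My / fact k * P))"
  define C1 where "C1 = NJ * \<Lambda> ^ CARD('s) * (\<bar>L\<bar> * (N * CY))"
  define C2 where "C2 = N * (S * (NJ * \<Lambda> ^ CARD('s) * eb))"
  define K where "K = real k * (\<Lambda> * (a1 - a 0)) * (C1 + C2) + N * ey * (a1 - a 0)"
  show ?thesis
  proof (intro exI[of _ K] allI impI)
    fix h :: real and Yv :: "'s \<Rightarrow> nat \<Rightarrow> real^'n"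
    assume h0: "0 < h" and hR: "h * R < \<delta>" and CYh: "CY * h ^ k \<le> 1"
      and Yb: "\<forall>s j i. j < k \<longrightarrow> blk i = s \<longrightarrow> \<bar>Yv s j $ i - y (c + h * b s j) $ i\<bar> \<le> CY * h ^ k"
    define tn where "tn = c + h * a1"
    define tp where "tp = (\<lambda>i. c + h * a i)"
    define ts where "ts = (\<lambda>s j. c + h * b s j)"
    have inball: "c + h * \<theta> \<in> ball c \<delta>" if "\<bar>\<theta>\<bar> \<le> R" for \<theta>
    proof -
      have "\<bar>h * \<theta>\<bar> \<le> h * R" using that h0 by (simp add: abs_mult)
      then show ?thesis using hR by (simp add: dist_real_def)
    qed
    have dist2: "\<bar>(c + h * \<theta>1) - (c + h * \<theta>2)\<bar> \<le> 2 * R * h" if "\<bar>\<theta>1\<bar> \<le> R" "\<bar>\<theta>2\<bar> \<le> R" for \<theta>1 \<theta>2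
    proof -
      have "\<bar>(c + h * \<theta>1) - (c + h * \<theta>2)\<bar> = h * \<bar>\<theta>1 - \<theta>2\<bar>" 
      proof -
        have "(c + h * \<theta>1) - (c + h * \<theta>2) = h * (\<theta>1 - \<theta>2)" by (simp add: algebra_simps)
        then show ?thesis using h0 by (simp add: abs_mult)
      qed
      also have "\<dots> \<le> h * (2 * R)" using that h0 by (intro mult_left_mono) auto
      finally show ?thesis by (simp add: mult.commute mult.left_commute)
    qed
    have a0R: "\<bar>a 0\<bar> \<le> R" using Ra k by simp
    have tpin: "tp i \<in> ball c \<delta>" if "i < k" for i unfolding tp_def using inball Ra that by blast
    have tsin: "ts s j \<in> ball c \<delta>" if "j < k" for s j unfolding ts_def using inball Rb that by blast
    have injtp: "inj_on tp {..<k}" unfolding tp_def by (rule dec_inj[OF adec]) (use h0 in simp)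
    have injts: "inj_on (ts s) {..<k}" for s unfolding ts_def by (rule dec_inj) (use bdec h0 in auto)
    have dpos: "tp 0 < tn" using a01 h0 by (simp add: tp_def tn_def)
    have dlen: "tn - tp 0 = h * (a1 - a 0)" by (simp add: tp_def tn_def algebra_simps)
    have lts_t: "\<bar>lagr k (ts s) j (c + h * \<theta>)\<bar> \<le> \<Lambda>" if "j < k" "\<bar>\<theta>\<bar> \<le> R" for s j \<theta>
    proof -
      have "lagr k (ts s) j (c + h * \<theta>) = lagr k (b s) j \<theta>" unfolding ts_def by (rule lagr_scale) (use h0 in simp)
      then show ?thesis using lb that by simp
    qed
    have ltp_t: "\<bar>lagr k tp i (c + h * \<theta>)\<bar> \<le> \<Lambda>" if "i < k" "\<bar>\<theta>\<bar> \<le> R" for i \<theta>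
    proof -
      have "lagr k tp i (c + h * \<theta>) = lagr k a i \<theta>" unfolding tp_def by (rule lagr_scale) (use h0 in simp)
      then show ?thesis using la that by simp
    qed
    have ivl: "t = c + h * ((t - c) / h) \<and> \<bar>(t - c) / h\<bar> \<le> R" if "t \<in> {tp 0..tn}" for t
    proof -
      have "h * a 0 \<le> t - c" "t - c \<le> h * a1" using that by (auto simp: tp_def tn_def)
      then have "a 0 \<le> (t - c) / h" "(t - c) / h \<le> a1" using h0 by (auto simp: field_simps)
      then show ?thesis using h0 a0R Ra1 by (auto simp: abs_le_iff)
    qed
    define I where "I i = integral {tp 0..tn} (lagr k tp i)" for i
    define w where "w i J = (\<Prod>s\<in>UNIV. lagr k (ts s) (J s) (tp i))" for i J
    define vY where "vY J = (\<chi> i'. Yv (blk i') (J (blk i')) $ i')" for J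
    define vy where "vy J = zz (\<lambda>s. ts s (J s))" for J
    define W where "W i = (\<Sum>J\<in>JS. w i J *\<^sub>R D (vY J))" for i
    define V where "V i = (\<Sum>J\<in>JS. w i J *\<^sub>R D (vy J))" for i
    define g where "g i = D (y (tp i))" for i
    have dec: "lts_substep k blk D tn tp ts Yv = (\<Sum>i<k. I i *\<^sub>R W i)"
      using substep_decomp[of tn tp k blk D ts Yv] dpos by (simp add: W_def vY_def JS_def I_def w_def)
    have split: "(\<Sum>i<k. I i *\<^sub>R W i) - (y tn - y (tp 0))
        = (\<Sum>i<k. I i *\<^sub>R (W i - g i)) + ((\<Sum>i<k. I i *\<^sub>R g i) - (y tn - y (tp 0)))"
      by (simp add: scaleR_diff_right sum_subtractf)
    have Ib: "\<bar>I i\<bar> \<le> \<Lambda> * (h * (a1 - a 0))" if "i < k" for i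
    proof -
      have "\<bar>I i\<bar> \<le> \<Lambda> * (tn - tp 0)" unfolding I_def
      proof (rule integral_lagr_bound)
        show "tp 0 \<le> tn" using dpos by simp
        fix t assume "t \<in> {tp 0..tn}"
        then have "t = c + h * ((t - c) / h)" "\<bar>(t - c) / h\<bar> \<le> R" using ivl by blast+
        then show "\<bar>lagr k tp i t\<bar> \<le> \<Lambda>" using ltp_t[OF that] by metis
      qed
      then show ?thesis using dlen by simp
    qed
    have Kc12: "Kc 1 \<subseteq> Kc 2"
    proof
      fix v assume "v \<in> Kc 1"
      then have "\<bar>v $ i' - y c $ i'\<bar> \<le> 1" for i' unfolding Kc_iff by blast
      then have "\<bar>v $ i' - y c $ i'\<bar> \<le> 2" for i' by (meson order.trans one_le_numeral)
      then show "v \<in> Kc 2" unfolding Kc_iff by blast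
    qed
    have vyK: "vy J \<in> Kc 1" if "J \<in> JS" for J
      unfolding vy_def by (rule zz_in) (use that tsin in \<open>auto simp: JS_def\<close>)
    have vyc: "vy J $ i' = y (ts (blk i') (J (blk i'))) $ i'" for J i' by (simp add: vy_def zz_def)
    have vYc: "\<bar>vY J $ i' - vy J $ i'\<bar> \<le> CY * h ^ k" if "J \<in> JS" for J i'
    proof -
      have "J (blk i') < k" using that by (simp add: JS_def)
      then show ?thesis using Yb[THEN spec[of _ "blk i'"], THEN spec[of _ "J (blk i')"], THEN spec[of _ i']] by (simp add: vY_def vyc ts_def)
    qed
    have vYK: "vY J \<in> Kc 2" if "J \<in> JS" for J
      unfolding Kc_iff
    proof
      fix i'
      have "\<bar>vy J $ i' - y c $ i'\<bar> \<le> 1" using vyK[OF that] by (simp add: Kc_iff)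
      then show "\<bar>vY J $ i' - y c $ i'\<bar> \<le> 2" using vYc[OF that, of i'] CYh by linarith
    qed
    have dvn: "norm (vY J - vy J) \<le> N * (CY * h ^ k)" if "J \<in> JS" for J
    proof -
      have "norm (vY J - vy J) \<le> (\<Sum>i'\<in>UNIV. \<bar>(vY J - vy J) $ i'\<bar>)" by (rule norm_le_l1_cart)
      also have "\<dots> \<le> (\<Sum>i'\<in>(UNIV::'n set). CY * h ^ k)" by (rule sum_mono) (use vYc[OF that] in simp)
      finally show ?thesis by (simp add: N_def)
    qed
    have Dd: "norm (D (vY J) - D (vy J)) \<le> \<bar>L\<bar> * (N * (CY * h ^ k))" if "J \<in> JS" for J
    proof -
      have "norm (D (vY J) - D (vy J)) \<le> L * norm (vY J - vy J)" using L vYK[OF that] Kc12 vyK[OF that] by blast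
      also have "\<dots> \<le> \<bar>L\<bar> * norm (vY J - vy J)" by (intro mult_right_mono) auto
      also have "\<dots> \<le> \<bar>L\<bar> * (N * (CY * h ^ k))" by (intro mult_left_mono dvn[OF that]) auto
      finally show ?thesis .
    qed
    have wb: "\<bar>w i J\<bar> \<le> \<Lambda> ^ CARD('s)" if "i < k" "J \<in> JS" for i J
      unfolding w_def
    proof (rule prod_abs_le[OF _ \<Lambda>1])
      fix s
      have "J s < k" using that by (simp add: JS_def)
      then show "\<bar>lagr k (ts s) (J s) (tp i)\<bar> \<le> \<Lambda>" unfolding tp_def by (rule lts_t) (use Ra that in auto)
    qed
    have WVb: "norm (W i - V i) \<le> C1 * h ^ k" if "i < k" for i
    proof -
      have "W i - V i = (\<Sum>J\<in>JS. w i J *\<^sub>R (D (vY J) - D (vy J)))"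
        by (simp add: W_def V_def scaleR_diff_right sum_subtractf)
      then have "norm (W i - V i) \<le> (\<Sum>J\<in>JS. norm (w i J *\<^sub>R (D (vY J) - D (vy J))))"
        by (metis norm_sum)
      also have "\<dots> \<le> (\<Sum>J\<in>JS. \<Lambda> ^ CARD('s) * (\<bar>L\<bar> * (N * (CY * h ^ k))))"
      proof (rule sum_mono)
        fix J assume J: "J \<in> JS"
        show "norm (w i J *\<^sub>R (D (vY J) - D (vy J))) \<le> \<Lambda> ^ CARD('s) * (\<bar>L\<bar> * (N * (CY * h ^ k)))"
          unfolding norm_scaleR using wb[OF that J] Dd[OF J] \<Lambda>1 by (intro mult_mono) auto
      qed
      also have "\<dots> = C1 * h ^ k" by (simp add: C1_def NJ_def algebra_simps)
      finally show ?thesis .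
    qed
    have Vgc: "\<bar>(V i - g i) $ j\<bar> \<le> S * (NJ * \<Lambda> ^ CARD('s) * (eb * h ^ k))" if "i < k" for i j
    proof -
      have te: "\<bar>(\<Sum>J\<in>{J. \<forall>s. J s < k}. (\<Prod>s\<in>UNIV. lagr k (ts s) (J s) (tp i)) * D (zz (\<lambda>s. ts s (J s))) $ j)
          - D (zz (\<lambda>_. tp i)) $ j\<bar>
        \<le> real CARD('s) * (real (card {J :: 's \<Rightarrow> nat. \<forall>s. J s < k}) * \<Lambda> ^ CARD('s) * (real k * (\<Lambda> * (Mb / fact k * (2 * R * h) ^ k))))"
      proof (rule tensor_err[where F="\<lambda>\<sigma>. D (zz \<sigma>) $ j" and \<nu>=ts and lw="\<lambda>s jj. lagr k (ts s) jj (tp i)"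
            and t="tp i" and V="ball c \<delta>", OF k])
        show "(\<Sum>jj<k. lagr k (ts s) jj (tp i)) = 1" for s by (rule lagr_sum1[OF injts k])
        show "\<bar>lagr k (ts s) jj (tp i)\<bar> \<le> \<Lambda>" if "jj < k" for s jj
          unfolding tp_def by (rule lts_t) (use Ra \<open>i < k\<close> that in auto)
        show "1 \<le> \<Lambda>" by (rule \<Lambda>1)
        show "tp i \<in> ball c \<delta>" by (rule tpin[OF that])
        show "ts s jj \<in> ball c \<delta>" if "jj < k" for s jj by (rule tsin[OF that])
        fix \<sigma> :: "'s \<Rightarrow> real" and s :: 's assume \<sigma>: "\<forall>s'. \<sigma> s' \<in> ball c \<delta>"
        have hyp: "\<forall>jj<k. ts s jj \<in> ball c \<delta> \<and> \<bar>ts s jj - tp i\<bar> \<le> 2 * R * h \<and> \<bar>lagr k (ts s) jj (tp i)\<bar> \<le> \<Lambda>"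
        proof (intro allI impI conjI)
          fix jj assume jj: "jj < k"
          show "ts s jj \<in> ball c \<delta>" by (rule tsin[OF jj])
          show "\<bar>ts s jj - tp i\<bar> \<le> 2 * R * h" unfolding ts_def tp_def by (rule dist2) (use Rb Ra jj that in auto)
          show "\<bar>lagr k (ts s) jj (tp i)\<bar> \<le> \<Lambda>" unfolding tp_def by (rule lts_t) (use Ra jj that in auto)
        qed
        show "\<bar>(\<Sum>jj<k. lagr k (ts s) jj (tp i) * D (zz (\<sigma>(s := ts s jj))) $ j) - D (zz (\<sigma>(s := tp i))) $ j\<bar>
            \<le> real k * (\<Lambda> * (Mb / fact k * (2 * R * h) ^ k))"
          using Mb[THEN spec[of _ s], THEN spec[of _ j], THEN spec[of _ \<sigma>], THEN spec[of _ "tp i"],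
              THEN spec[of _ "ts s"], THEN spec[of _ "2 * R * h"], THEN spec[of _ \<Lambda>]] \<sigma> tpin[OF that] injts[of s] hyp
          by blast
      qed
      have eq1: "(V i - g i) $ j = (\<Sum>J\<in>{J. \<forall>s. J s < k}. (\<Prod>s\<in>UNIV. lagr k (ts s) (J s) (tp i)) * D (zz (\<lambda>s. ts s (J s))) $ j)
          - D (zz (\<lambda>_. tp i)) $ j"
        by (simp add: V_def g_def zz_const w_def vy_def JS_def)
      have eq2: "real k * (\<Lambda> * (Mb / fact k * (2 * R * h) ^ k)) = eb * h ^ k"
        by (simp add: eb_def P_def power_mult_distrib)
      show ?thesis using te unfolding eq1 eq2 by (simp add: S_def NJ_def JS_def)
    qed
    have Vgb: "norm (V i - g i) \<le> C2 * h ^ k" if "i < k" for i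
    proof -
      have "norm (V i - g i) \<le> (\<Sum>j\<in>UNIV. \<bar>(V i - g i) $ j\<bar>)" by (rule norm_le_l1_cart)
      also have "\<dots> \<le> (\<Sum>j\<in>(UNIV::'n set). S * (NJ * \<Lambda> ^ CARD('s) * (eb * h ^ k)))"
        by (rule sum_mono) (rule Vgc[OF that])
      also have "\<dots> = C2 * h ^ k" by (simp add: C2_def N_def algebra_simps)
      finally show ?thesis .
    qed
    have third: "norm ((\<Sum>i<k. I i *\<^sub>R g i) - (y tn - y (tp 0))) \<le> (N * (ey * h ^ k)) * (tn - tp 0)"
      unfolding I_def
    proof (rule ab_integral_err)
      show "tp 0 \<le> tn" using dpos by simp
      fix t assume t: "t \<in> {tp 0..tn}"
      then have tb: "t = c + h * ((t - c) / h)" "\<bar>(t - c) / h\<bar> \<le> R" using ivl by blast+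
      have tin: "t \<in> ball c \<delta>" using inball[OF tb(2)] tb(1) by metis
      show "(y has_vector_derivative D (y t)) (at t)" by (rule yder[OF tin])
      have cc: "\<bar>((\<Sum>i<k. lagr k tp i t *\<^sub>R g i) - D (y t)) $ j\<bar> \<le> ey * h ^ k" for j
      proof -
        have hyp: "\<forall>jj<k. tp jj \<in> ball c \<delta> \<and> \<bar>tp jj - t\<bar> \<le> 2 * R * h \<and> \<bar>lagr k tp jj t\<bar> \<le> \<Lambda>"
        proof (intro allI impI conjI)
          fix jj assume jj: "jj < k"
          show "tp jj \<in> ball c \<delta>" by (rule tpin[OF jj])
          show "\<bar>tp jj - t\<bar> \<le> 2 * R * h" using dist2[OF Ra[OF jj] tb(2)] tb(1) unfolding tp_def by metis
          show "\<bar>lagr k tp jj t\<bar> \<le> \<Lambda>" using ltp_t[OF jj tb(2)] tb(1) by metis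
        qed
        have "\<bar>(\<Sum>jj<k. lagr k tp jj t * D (y (tp jj)) $ j) - D (y t) $ j\<bar> \<le> real k * (\<Lambda> * (My / fact k * (2 * R * h) ^ k))"
          using My[THEN spec[of _ j], THEN spec[of _ t], THEN spec[of _ tp], THEN spec[of _ "2 * R * h"], THEN spec[of _ \<Lambda>]]
            tin injtp hyp by blast
        moreover have "real k * (\<Lambda> * (My / fact k * (2 * R * h) ^ k)) = ey * h ^ k"
          by (simp add: ey_def P_def power_mult_distrib)
        ultimately show ?thesis by (simp add: g_def)
      qed
      have "norm ((\<Sum>i<k. lagr k tp i t *\<^sub>R g i) - D (y t)) \<le> (\<Sum>j\<in>UNIV. \<bar>((\<Sum>i<k. lagr k tp i t *\<^sub>R g i) - D (y t)) $ j\<bar>)"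
        by (rule norm_le_l1_cart)
      also have "\<dots> \<le> (\<Sum>j\<in>(UNIV::'n set). ey * h ^ k)" by (rule sum_mono) (rule cc)
      finally show "norm ((\<Sum>i<k. lagr k tp i t *\<^sub>R g i) - D (y t)) \<le> N * (ey * h ^ k)" by (simp add: N_def)
    qed
    have Wg: "norm (W i - g i) \<le> (C1 + C2) * h ^ k" if "i < k" for i
    proof -
      have "W i - g i = (W i - V i) + (V i - g i)" by simp
      then have "norm (W i - g i) \<le> norm (W i - V i) + norm (V i - g i)" by (metis norm_triangle_ineq)
      then show ?thesis using WVb[OF that] Vgb[OF that] by (simp add: algebra_simps)
    qed
    have first: "norm (\<Sum>i<k. I i *\<^sub>R (W i - g i)) \<le> real k * ((\<Lambda> * (h * (a1 - a 0))) * ((C1 + C2) * h ^ k))"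
    proof -
      have "norm (\<Sum>i<k. I i *\<^sub>R (W i - g i)) \<le> (\<Sum>i<k. norm (I i *\<^sub>R (W i - g i)))" by (rule norm_sum)
      also have "\<dots> \<le> (\<Sum>i<k. (\<Lambda> * (h * (a1 - a 0))) * ((C1 + C2) * h ^ k))"
      proof (rule sum_mono)
        fix i assume "i \<in> {..<k}"
        then have i: "i < k" by simp
        have "0 \<le> \<Lambda> * (h * (a1 - a 0))" using \<Lambda>1 h0 a01 by simp
        then show "norm (I i *\<^sub>R (W i - g i)) \<le> (\<Lambda> * (h * (a1 - a 0))) * ((C1 + C2) * h ^ k)"
          unfolding norm_scaleR using Ib[OF i] Wg[OF i] by (intro mult_mono) auto
      qed
      finally show ?thesis by simp
    qed
    have "norm (lts_substep k blk D tn tp ts Yv - (y tn - y (tp 0)))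
        \<le> norm (\<Sum>i<k. I i *\<^sub>R (W i - g i)) + norm ((\<Sum>i<k. I i *\<^sub>R g i) - (y tn - y (tp 0)))"
      unfolding dec split by (rule norm_triangle_ineq)
    also have "\<dots> \<le> real k * ((\<Lambda> * (h * (a1 - a 0))) * ((C1 + C2) * h ^ k)) + (N * (ey * h ^ k)) * (tn - tp 0)"
      using first third by (rule add_mono)
    also have "\<dots> = K * h ^ (k + 1)" by (simp add: K_def dlen algebra_simps)
    finally show "norm (lts_substep k blk D (c + h * a1) (\<lambda>i. c + h * a i) (\<lambda>s j. c + h * b s j) Yv
        - (y (c + h * a1) - y (c + h * a 0))) \<le> K * h ^ (k + 1)"
      by (simp add: tn_def tp_def ts_def)
  qed
qed

end

theorem mainTheorem2:
  fixes D :: "real^'n \<Rightarrow> real^'n"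
    and blk :: "'n \<Rightarrow> 's::finite"
    and y :: "real \<Rightarrow> real^'n"
    and T :: "real set" and c :: real and k :: nat
    and a1 :: real and a :: "nat \<Rightarrow> real" and b :: "'s \<Rightarrow> nat \<Rightarrow> real"
    and Y :: "real \<Rightarrow> 's \<Rightarrow> nat \<Rightarrow> real^'n"
  assumes "k \<ge> 1"
    and "surj blk"
    and "smooth_vf D"
    and "open T" and "c \<in> T"
    and "\<forall>t\<in>T. (y has_vector_derivative D (y t)) (at t)"
    and "a 0 < a1"
    and "\<forall>i. Suc i < k \<longrightarrow> a (Suc i) < a i"
    and "\<forall>s j. Suc j < k \<longrightarrow> b s (Suc j) < b s j"
    and "\<forall>s. b s 0 \<le> a 0"
    and "\<forall>s j i. j < k \<longrightarrow> blk i = s \<longrightarrow>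
           (\<lambda>h. Y h s j $ i - y (c + h * b s j) $ i) \<in> O[at_right 0](\<lambda>h. h ^ k)"
  shows "(\<lambda>h. norm (lts_substep k blk D (c + h * a1) (\<lambda>i. c + h * a i)
                        (\<lambda>s j. c + h * b s j) (Y h)
                   - (y (c + h * a1) - y (c + h * a 0))))
           \<in> O[at_right 0](\<lambda>h. h ^ (k + 1))"
proof -
  note Yasm = assms(11)
  have k: "0 < k" using assms(1) by simp
  obtain \<delta>0 where d0: "0 < \<delta>0" "ball c \<delta>0 \<subseteq> T"
    using assms(4,5) open_contains_ball by blast
  have "(y has_vector_derivative D (y c)) (at c)" using assms(5,6) by blast
  then have "continuous (at c) y" by (rule has_vector_derivative_continuous)
  then obtain \<delta>1 where d1: "0 < \<delta>1" "\<And>t. dist t c < \<delta>1 \<Longrightarrow> dist (y t) (y c) < 1"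
    unfolding continuous_at_eps_delta by (meson zero_less_one)
  define \<delta> where "\<delta> = min \<delta>0 \<delta>1"
  interpret L: lts D y blk c \<delta>
  proof
    show "smooth_vf D" by (rule assms(3))
    show "(y has_vector_derivative D (y t)) (at t)" if "t \<in> ball c \<delta>" for t
      using that d0(2) assms(6) by (auto simp: \<delta>_def)
    show "\<bar>y t $ i - y c $ i\<bar> \<le> 1" if "t \<in> ball c \<delta>" for t i
    proof -
      have "dist t c < \<delta>1" using that by (auto simp: \<delta>_def dist_commute)
      then have "dist (y t) (y c) < 1" by (rule d1(2))
      then have "norm (y t - y c) < 1" by (simp add: dist_norm)
      moreover have "\<bar>(y t - y c) $ i\<bar> \<le> norm (y t - y c)" by (rule component_le_norm_cart)
      ultimately show ?thesis by simp
    qed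
    show "0 < \<delta>" using d0 d1 by (simp add: \<delta>_def)
  qed
  have dpos: "0 < \<delta>" using d0 d1 by (simp add: \<delta>_def)
  define R where "R = 1 + \<bar>a1\<bar> + (\<Sum>i<k. \<bar>a i\<bar>) + (\<Sum>s\<in>UNIV. \<Sum>j<k. \<bar>b s j\<bar>)"
  have s1: "0 \<le> (\<Sum>i<k. \<bar>a i\<bar>)" by (simp add: sum_nonneg)
  have s2: "0 \<le> (\<Sum>s\<in>UNIV. \<Sum>j<k. \<bar>b s j\<bar>)" by (simp add: sum_nonneg)
  have R1: "1 \<le> R" using s1 s2 by (simp add: R_def)
  have Ra1: "\<bar>a1\<bar> \<le> R" using s1 s2 by (simp add: R_def)
  have Ra: "\<bar>a i\<bar> \<le> R" if "i < k" for i
  proof -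
    have "\<bar>a i\<bar> \<le> (\<Sum>i<k. \<bar>a i\<bar>)" by (rule member_le_sum) (use that in auto)
    then show ?thesis using s2 by (simp add: R_def)
  qed
  have Rb: "\<bar>b s j\<bar> \<le> R" if "j < k" for s j
  proof -
    have "\<bar>b s j\<bar> \<le> (\<Sum>j<k. \<bar>b s j\<bar>)" by (rule member_le_sum) (use that in auto)
    also have "\<dots> \<le> (\<Sum>s\<in>UNIV. \<Sum>j<k. \<bar>b s j\<bar>)" by (rule member_le_sum) (auto intro: sum_nonneg)
    finally show ?thesis using s1 abs_ge_zero[of a1] unfolding R_def by linarith
  qed
  define E where "E s j i h = \<bar>Y h s j $ i - y (c + h * b s j) $ i\<bar>" for s j i h
  define P where "P = {(s, j, i). j < k \<and> blk i = s}"
  have finP: "finite P"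
  proof (rule finite_subset)
    show "P \<subseteq> UNIV \<times> {..<k} \<times> UNIV" by (auto simp: P_def)
  qed auto
  have ex: "\<forall>p\<in>P. \<exists>C. 0 < C \<and> eventually (\<lambda>h. (case p of (s, j, i) \<Rightarrow> E s j i h) \<le> C * \<bar>h ^ k\<bar>) (at_right 0)"
  proof
    fix p assume "p \<in> P"
    then obtain s j i where p: "p = (s, j, i)" "j < k" "blk i = s" by (auto simp: P_def)
    have "(\<lambda>h. Y h s j $ i - y (c + h * b s j) $ i) \<in> O[at_right 0](\<lambda>h. h ^ k)"
      using Yasm p by blast
    then obtain C where "C > 0" "eventually (\<lambda>h. norm (Y h s j $ i - y (c + h * b s j) $ i) \<le> C * norm (h ^ k)) (at_right 0)"
      by (rule landau_o.bigE)
    then show "\<exists>C. 0 < C \<and> eventually (\<lambda>h. (case p of (s, j, i) \<Rightarrow> E s j i h) \<le> C * \<bar>h ^ k\<bar>) (at_right 0)"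
      by (intro exI[of _ C]) (auto simp: p E_def)
  qed
  from bchoice[OF ex] obtain Cf where Cf: "\<forall>p\<in>P. 0 < Cf p \<and> eventually (\<lambda>h. (case p of (s, j, i) \<Rightarrow> E s j i h) \<le> Cf p * \<bar>h ^ k\<bar>) (at_right 0)"
    by blast
  define CY where "CY = (\<Sum>p\<in>P. Cf p)"
  have CY0: "0 \<le> CY" unfolding CY_def using Cf by (intro sum_nonneg) (auto intro: less_imp_le)
  have CfCY: "Cf p \<le> CY" if "p \<in> P" for p
    unfolding CY_def by (rule member_le_sum) (use that Cf finP in \<open>auto intro: less_imp_le\<close>)
  have evY: "eventually (\<lambda>h. \<forall>p\<in>P. (case p of (s, j, i) \<Rightarrow> E s j i h) \<le> Cf p * \<bar>h ^ k\<bar>) (at_right 0)"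
    using Cf finP by (intro eventually_ball_finite) auto
  obtain K where K: "\<forall>h Yv. 0 < h \<longrightarrow> h * R < \<delta> \<longrightarrow> CY * h ^ k \<le> 1 \<longrightarrow>
     (\<forall>s j i. j < k \<longrightarrow> blk i = s \<longrightarrow> \<bar>Yv s j $ i - y (c + h * b s j) $ i\<bar> \<le> CY * h ^ k) \<longrightarrow>
     norm (lts_substep k blk D (c + h * a1) (\<lambda>i. c + h * a i) (\<lambda>s j. c + h * b s j) Yv
        - (y (c + h * a1) - y (c + h * a 0))) \<le> K * h ^ (k + 1)"
    using L.core[OF assms(1) assms(8) assms(9) assms(7) R1 Ra Ra1 Rb CY0] by blast
  define h0 where "h0 = min (min (\<delta> / R) 1) (1 / (CY + 1))"
  have h0pos: "0 < h0" using dpos R1 CY0 by (simp add: h0_def)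
  have evh: "eventually (\<lambda>h. 0 < h \<and> h < h0) (at_right (0::real))"
    unfolding eventually_at_right_field using h0pos by blast
  show ?thesis
  proof (rule bigoI[where c=K])
    show "eventually (\<lambda>h. norm (norm (lts_substep k blk D (c + h * a1) (\<lambda>i. c + h * a i)
                        (\<lambda>s j. c + h * b s j) (Y h)
                   - (y (c + h * a1) - y (c + h * a 0)))) \<le> K * norm (h ^ (k + 1))) (at_right 0)"
      using evh evY
    proof eventually_elim
      case (elim h)
      then have h: "0 < h" "h < h0" by auto
      have hR: "h * R < \<delta>"
      proof -
        have "h < \<delta> / R" using h by (simp add: h0_def)
        then show ?thesis using R1 by (simp add: field_simps)
      qed
      have h1: "h \<le> 1" using h by (simp add: h0_def)
      have hk: "h ^ k \<le> h" using power_decreasing[of 1 k h] assms(1) h h1 by simp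
      have "CY * h ^ k \<le> CY * h" using hk CY0 by (rule mult_left_mono)
      also have "\<dots> \<le> CY * (1 / (CY + 1))" using h CY0 by (intro mult_left_mono) (auto simp: h0_def)
      also have "\<dots> \<le> 1" using CY0 by (simp add: field_simps)
      finally have CYh: "CY * h ^ k \<le> 1" .
      have Yb: "\<forall>s j i. j < k \<longrightarrow> blk i = s \<longrightarrow> \<bar>Y h s j $ i - y (c + h * b s j) $ i\<bar> \<le> CY * h ^ k"
      proof (intro allI impI)
        fix s j i assume "j < k" "blk i = s"
        then have p: "(s, j, i) \<in> P" by (simp add: P_def)
        then have "E s j i h \<le> Cf (s, j, i) * \<bar>h ^ k\<bar>" using elim by fastforce
        also have "\<dots> \<le> CY * h ^ k" using CfCY[OF p] h by (simp add: mult_right_mono)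
        finally show "\<bar>Y h s j $ i - y (c + h * b s j) $ i\<bar> \<le> CY * h ^ k" by (simp add: E_def)
      qed
      have "norm (lts_substep k blk D (c + h * a1) (\<lambda>i. c + h * a i) (\<lambda>s j. c + h * b s j) (Y h)
        - (y (c + h * a1) - y (c + h * a 0))) \<le> K * h ^ (k + 1)"
        using K h(1) hR CYh Yb by blast
      then show ?case using h by simp
    qed
  qed
qed

end
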